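(* Let $G$ be a triangular graph and run the procedure described in the context on $G$, starting with two vertices of the outer triangle as the distinguished vertices $v_1,v_2$ (clockwise consecutive, with the edge $v_1v_2$ given some orientation). Then in the resulting orientation every interior vertex of $G$ has in-degree exactly $3$; that is, the restriction of the constructed orientation to the interior edges of $G$ is an internal $3$-orientation.
   Context: A triangular graph is a plane graph with at least 3 vertices all of whose faces, including the outer one, are triangles; its interior vertices/edges are those not on the outer triangle. A near triangulation is a 2-connected plane graph whose outer face is bounded by a cycle (the outer cycle) and all of whose inner faces are triangles. An internal 3-orientation of a triangular graph is an orientation of its interior edges in which every interior vertex has in-degree exactly 3. The procedure: its input is a near triangulation $H$ with two distinguished vertices $v_1,v_2$ such that $v_2$ immediately follows $v_1$ clockwise on the outer cycle; the edge $v_1v_2$ is already oriented, other edges are not. It orients every edge and gives each edge a strength 1 or 2, as follows. (Recursive step) If the outer cycle has a chord $v_av_b$, it splits the outer cycle into cycles $C_1$ (containing $v_1,v_2$) and $C_2$; let $H_1,H_2$ be the subgraphs formed by $C_1$, $C_2$ with their interiors. Run the procedure first on $H_1$ with distinguished vertices $v_1,v_2$, and then on $H_2$ with the endpoints of the chord as distinguished vertices, ordered so that the second immediately follows the first clockwise on the outer cycle of $H_2$ (the chord has been oriented during the run on $H_1$). (Orienting step) If the outer cycle has no chord, let $v_3$ be the vertex immediately following $v_2$ clockwise on the outer cycle (the central vertex). Every edge of the current graph incident to $v_3$ that lies on the outer cycle is oriented towards $v_3$ and given strength 1; every other edge of the current graph incident to $v_3$ is oriented away from $v_3$ and given strength 2.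 Then $v_3$ is deleted, and if vertices other than $v_1,v_2$ remain, the procedure is called recursively on the remaining graph with the same distinguished vertices $v_1,v_2$. *)

theory Defs
  imports Main
begin

text \<open>A plane graph all of whose faces are triangles is represented by the set T of its
  faces, each face being recorded as an oriented triple (a,b,c) of its boundary
  vertices, together with all its cyclic rotations.  All faces are oriented
  coherently (orientation of the sphere), with the convention that the inner faces
  (all faces except the outer one) list their vertices in clockwise order in the
  plane.\<close>

definition darts :: "('v \<times> 'v \<times> 'v) set \<Rightarrow> ('v \<times> 'v) set" where
  "darts T = {(a,b). \<exists>c. (a,b,c) \<in> T}"

definition verts :: "('v \<times> 'v \<times> 'v) set \<Rightarrow> 'v set" where
  "verts T = {a. \<exists>b c. (a,b,c) \<in> T}"

definition edges :: "('v \<times> 'v \<times> 'v) set \<Rightarrow> 'v set set" where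
  "edges T = {{a,b} | a b. (a,b) \<in> darts T}"

definition link :: "('v \<times> 'v \<times> 'v) set \<Rightarrow> 'v \<Rightarrow> ('v \<times> 'v) set" where
  "link T v = {(u,w). (v,u,w) \<in> T}"

text \<open>Triangular graph: a simple plane graph with at least 3 vertices all of whose
  faces (including the outer one) are triangles, i.e. a coherently oriented
  triangulation of the 2-sphere: every dart lies in exactly one face, every edge has
  two sides, the link of every vertex is a single cycle (no pinched vertices), the
  graph is connected, and Euler's formula V - E + F = 2 holds.\<close>
definition triangular_graph :: "('v \<times> 'v \<times> 'v) set \<Rightarrow> bool" where
  "triangular_graph T \<longleftrightarrow>
     finite T \<and> card (verts T) \<ge> 3 \<and>
     (\<forall>a b c. (a,b,c) \<in> T \<longrightarrow> a \<noteq> b \<and> b \<noteq> c \<and> a \<noteq> c) \<and>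
     (\<forall>a b c. (a,b,c) \<in> T \<longrightarrow> (b,c,a) \<in> T) \<and>
     (\<forall>a b c c'. (a,b,c) \<in> T \<longrightarrow> (a,b,c') \<in> T \<longrightarrow> c = c') \<and>
     (\<forall>a b. (a,b) \<in> darts T \<longrightarrow> (b,a) \<in> darts T) \<and>
     (\<forall>v u w. (v,u) \<in> darts T \<longrightarrow> (v,w) \<in> darts T \<longrightarrow> (u,w) \<in> (link T v)\<^sup>*) \<and>
     (\<forall>x\<in>verts T. \<forall>y\<in>verts T. (x,y) \<in> (darts T)\<^sup>*) \<and>
     int (card (verts T)) - int (card (edges T)) + int (card T div 3) = 2"

text \<open>Near triangulations arising in the procedure are subgraphs of the triangular
  graph formed by a cycle and its interior; such a subgraph is represented by its set
  F of (clockwise oriented) inner faces.  Its outer cycle consists of the boundary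
  darts, traversed clockwise: (a,b) is a boundary dart iff b immediately follows a
  clockwise on the outer cycle.\<close>
definition bdarts :: "('v \<times> 'v \<times> 'v) set \<Rightarrow> ('v \<times> 'v) set" where
  "bdarts F = {(a,b). (a,b) \<in> darts F \<and> (b,a) \<notin> darts F}"

definition bverts :: "('v \<times> 'v \<times> 'v) set \<Rightarrow> 'v set" where
  "bverts F = {a. \<exists>b. (a,b) \<in> bdarts F}"

definition is_chord :: "('v \<times> 'v \<times> 'v) set \<Rightarrow> 'v \<Rightarrow> 'v \<Rightarrow> bool" where
  "is_chord F x y \<longleftrightarrow> x \<in> bverts F \<and> y \<in> bverts F \<and> {x,y} \<in> edges F \<and>
     (x,y) \<notin> bdarts F \<and> (y,x) \<notin> bdarts F"

definition rot_closed :: "('v \<times> 'v \<times> 'v) set \<Rightarrow> bool" where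
  "rot_closed F \<longleftrightarrow> (\<forall>a b c. (a,b,c) \<in> F \<longrightarrow> (b,c,a) \<in> F)"

text \<open>Arcs oriented in the orienting step at central vertex z: edges of the current
  graph at z lying on the outer cycle are oriented towards z, all other edges at z
  away from z.  (Strengths are not recorded; they do not influence orientations.)\<close>
definition orient_at :: "('v \<times> 'v \<times> 'v) set \<Rightarrow> 'v \<Rightarrow> ('v \<times> 'v) set" where
  "orient_at F z =
     {(u,z) | u. {u,z} \<in> edges F \<and> ((u,z) \<in> bdarts F \<or> (z,u) \<in> bdarts F)} \<union>
     {(z,u) | u. {u,z} \<in> edges F \<and> (u,z) \<notin> bdarts F \<and> (z,u) \<notin> bdarts F}"

text \<open>proc F v1 v2 O: some run of the procedure on the near triangulation with inner
  face set F and distinguished vertices v1, v2 orients the edges as in the arc set O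
  (the pre-oriented edge v1v2 is not included in O).\<close>
inductive proc :: "('v \<times> 'v \<times> 'v) set \<Rightarrow> 'v \<Rightarrow> 'v \<Rightarrow> ('v \<times> 'v) set \<Rightarrow> bool" where
  chord_step:
    "\<lbrakk> (v1,v2) \<in> bdarts F; is_chord F x y;
       F = F1 \<union> F2; F1 \<inter> F2 = {}; F1 \<noteq> {}; F2 \<noteq> {}; rot_closed F1; rot_closed F2;
       edges F1 \<inter> edges F2 = {{x,y}};
       (v1,v2) \<in> bdarts F1; (x,y) \<in> bdarts F2;
       proc F1 v1 v2 Or1; proc F2 x y Or2 \<rbrakk>
     \<Longrightarrow> proc F v1 v2 (Or1 \<union> Or2)"
| orient_last:
    "\<lbrakk> (v1,v2) \<in> bdarts F; \<not> (\<exists>x y. is_chord F x y); (v2,z) \<in> bdarts F;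
       {t \<in> F. z \<notin> {fst t, fst (snd t), snd (snd t)}} = {} \<rbrakk>
     \<Longrightarrow> proc F v1 v2 (orient_at F z)"
| orient_step:
    "\<lbrakk> (v1,v2) \<in> bdarts F; \<not> (\<exists>x y. is_chord F x y); (v2,z) \<in> bdarts F;
       F' = {t \<in> F. z \<notin> {fst t, fst (snd t), snd (snd t)}}; F' \<noteq> {};
       proc F' v1 v2 Or' \<rbrakk>
     \<Longrightarrow> proc F v1 v2 (orient_at F z \<union> Or')"

end

theory Submission
  imports Defs
begin

definition wf1 :: "('v \<times> 'v \<times> 'v) set \<Rightarrow> bool" where
 "wf1 F \<longleftrightarrow> finite F \<and> rot_closed F \<and> (\<forall>a b c. (a,b,c)\<in>F \<longrightarrow> a\<noteq>b \<and> b\<noteq>c \<and> a\<noteq>c)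
    \<and> (\<forall>a b c c'. (a,b,c)\<in>F \<longrightarrow> (a,b,c')\<in>F \<longrightarrow> c=c')"

definition nbr :: "('v \<times> 'v \<times> 'v) set \<Rightarrow> 'v \<Rightarrow> 'v set" where
 "nbr F v = {u. (v,u) \<in> darts F \<or> (u,v) \<in> darts F}"

definition connl :: "('v \<times> 'v \<times> 'v) set \<Rightarrow> bool" where
 "connl F \<longleftrightarrow> (\<forall>v. \<forall>u\<in>nbr F v. \<forall>w\<in>nbr F v. (u,w) \<in> (link F v \<union> (link F v)\<inverse>)\<^sup>*)"

definition notwin :: "('v \<times> 'v \<times> 'v) set \<Rightarrow> bool" where
 "notwin F \<longleftrightarrow> (\<forall>v q z. (v,q,z)\<in>F \<longrightarrow> (v,z,q)\<notin>F)"

definition Tok :: "('v \<times> 'v \<times> 'v) set \<Rightarrow> bool" where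
 "Tok T \<longleftrightarrow> wf1 T \<and> (\<forall>v u w. (v,u) \<in> darts T \<longrightarrow> (v,w) \<in> darts T \<longrightarrow> (u,w) \<in> (link T v)\<^sup>*)"

definition Inv :: "('v \<times> 'v \<times> 'v) set \<Rightarrow> ('v \<times> 'v \<times> 'v) set \<Rightarrow> bool" where
 "Inv T F \<longleftrightarrow> wf1 F \<and> notwin F \<and> connl F \<and> F \<subseteq> T"

definition Pr :: "('v \<times> 'v \<times> 'v) set \<Rightarrow> 'v \<Rightarrow> 'v \<Rightarrow> ('v \<times> 'v) set \<Rightarrow> bool" where
 "Pr F v1 v2 Os \<longleftrightarrow> (\<forall>p\<in>Os. {fst p, snd p} \<in> edges F - {{v1,v2}})
   \<and> (\<forall>e\<in>edges F - {{v1,v2}}. \<exists>!p. p \<in> Os \<and> {fst p, snd p} = e)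
   \<and> (\<forall>v\<in>verts F. card {u. (u,v) \<in> Os} = (if v \<in> bverts F then (if v = v1 \<or> v = v2 then 0 else 2) else 3))"

lemma darts_iff: "(a,b) \<in> darts F \<longleftrightarrow> (\<exists>c. (a,b,c) \<in> F)"
  by (simp add: darts_def)
lemma link_iff: "(u,w) \<in> link F v \<longleftrightarrow> (v,u,w) \<in> F"
  by (simp add: link_def)
lemma bdarts_iff: "(a,b) \<in> bdarts F \<longleftrightarrow> (a,b) \<in> darts F \<and> (b,a) \<notin> darts F"
  by (simp add: bdarts_def)
lemma bverts_iff: "a \<in> bverts F \<longleftrightarrow> (\<exists>b. (a,b) \<in> bdarts F)"
  by (simp add: bverts_def)
lemma verts_iff: "a \<in> verts F \<longleftrightarrow> (\<exists>b c. (a,b,c) \<in> F)"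
  by (simp add: verts_def)
lemma edges_iff: "e \<in> edges F \<longleftrightarrow> (\<exists>a b. e = {a,b} \<and> (a,b) \<in> darts F)"
  by (auto simp add: edges_def)
lemma nbr_iff: "u \<in> nbr F v \<longleftrightarrow> (v,u) \<in> darts F \<or> (u,v) \<in> darts F"
  by (simp add: nbr_def)

lemma wf1_rot: "wf1 F \<Longrightarrow> (a,b,c) \<in> F \<Longrightarrow> (b,c,a) \<in> F"
  by (simp add: wf1_def rot_closed_def)
lemma wf1_rot2: "wf1 F \<Longrightarrow> (a,b,c) \<in> F \<Longrightarrow> (c,a,b) \<in> F"
  by (meson wf1_rot)
lemma wf1_dist: "wf1 F \<Longrightarrow> (a,b,c) \<in> F \<Longrightarrow> a\<noteq>b \<and> b\<noteq>c \<and> a\<noteq>c"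
  by (simp add: wf1_def)
lemma wf1_uniq: "wf1 F \<Longrightarrow> (a,b,c) \<in> F \<Longrightarrow> (a,b,c') \<in> F \<Longrightarrow> c = c'"
  unfolding wf1_def by blast
lemma wf1_fin: "wf1 F \<Longrightarrow> finite F"
  by (simp add: wf1_def)

lemma wf1_subset: "wf1 F \<Longrightarrow> G \<subseteq> F \<Longrightarrow> rot_closed G \<Longrightarrow> wf1 G"
  unfolding wf1_def by (blast intro: finite_subset)

lemma dom_link: "wf1 F \<Longrightarrow> Domain (link F v) = {u. (v,u) \<in> darts F}"
  by (auto simp: link_iff darts_iff Domain_iff)
lemma ran_link: "wf1 F \<Longrightarrow> Range (link F v) = {u. (u,v) \<in> darts F}"
  by (auto simp: link_iff darts_iff Range_iff; meson wf1_rot wf1_rot2)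
lemma nbr_field: "wf1 F \<Longrightarrow> nbr F v = Field (link F v)"
  by (auto simp: Field_def dom_link ran_link nbr_iff)

lemma link_fun: "wf1 F \<Longrightarrow> (u,w) \<in> link F v \<Longrightarrow> (u,w') \<in> link F v \<Longrightarrow> w = w'"
  by (auto simp: link_iff dest: wf1_uniq)
lemma link_inj: "wf1 F \<Longrightarrow> (u,w) \<in> link F v \<Longrightarrow> (u',w) \<in> link F v \<Longrightarrow> u = u'"
  by (auto simp: link_iff dest: wf1_uniq wf1_rot2)
lemma finite_link: "wf1 F \<Longrightarrow> finite (link F v)"
proof -
  assume "wf1 F"
  have "link F v \<subseteq> (\<lambda>(a,b,c). (b,c)) ` F" by (force simp: link_iff)
  then show ?thesis using wf1_fin[OF \<open>wf1 F\<close>] finite_subset by blast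
qed

lemma card_src_snk:
  assumes "finite R" and f: "\<And>x y y'. (x,y) \<in> R \<Longrightarrow> (x,y') \<in> R \<Longrightarrow> y = y'"
    and i: "\<And>x x' y. (x,y)\<in>R \<Longrightarrow> (x',y) \<in> R \<Longrightarrow> x = x'"
  shows "card (Domain R - Range R) = card (Range R - Domain R)"
proof -
  have "inj_on fst R" using f by (auto simp: inj_on_def)
  then have d: "card (Domain R) = card R" by (metis Domain_fst card_image)
  have "inj_on snd R" using i by (auto simp: inj_on_def)
  then have r: "card (Range R) = card R" by (metis Range_snd card_image)
  have fD: "finite (Domain R)" "finite (Range R)" using assms(1) by (auto simp: finite_Domain finite_Range)
  have "card (Domain R - Range R) = card (Domain R) - card (Domain R \<inter> Range R)"
    using fD by (simp add: card_Diff_subset_Int)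
  moreover have "card (Range R - Domain R) = card (Range R) - card (Range R \<inter> Domain R)"
    using fD by (simp add: card_Diff_subset_Int)
  ultimately show ?thesis using d r by (simp add: Int_commute)
qed

lemma bd_out_in: assumes "wf1 F" shows "(\<exists>u. (v,u) \<in> bdarts F) \<longleftrightarrow> (\<exists>u. (u,v) \<in> bdarts F)"
proof -
  let ?R = "link F v"
  have e1: "Domain ?R - Range ?R = {u. (v,u) \<in> bdarts F}"
    using assms by (auto simp: dom_link ran_link bdarts_iff)
  have e2: "Range ?R - Domain ?R = {u. (u,v) \<in> bdarts F}"
    using assms by (auto simp: dom_link ran_link bdarts_iff)
  have c: "card (Domain ?R - Range ?R) = card (Range ?R - Domain ?R)"
    using card_src_snk[of ?R] finite_link[OF assms] link_fun[OF assms] link_inj[OF assms] by blast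
  have f: "finite (Domain ?R - Range ?R)" "finite (Range ?R - Domain ?R)"
    using finite_link[OF assms] by (auto simp: finite_Domain finite_Range)
  show ?thesis using c f unfolding e1 e2 by (metis (mono_tags, lifting) card_0_eq empty_Collect_eq)
qed

lemma in_bverts: "wf1 F \<Longrightarrow> (u,v) \<in> bdarts F \<Longrightarrow> v \<in> bverts F"
  using bd_out_in bverts_iff by metis

lemma sink_reach:
  assumes f: "\<And>x y y'. (x,y) \<in> R \<Longrightarrow> (x,y') \<in> R \<Longrightarrow> y = y'" and e: "e \<notin> Domain R"
    and p: "(e,t) \<in> (R \<union> R\<inverse>)\<^sup>*"
  shows "(t,e) \<in> R\<^sup>*"
  using p
proof (induction rule: rtrancl_induct)
  case base then show ?case by simp
next
  case (step t t')
  show ?case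
  proof (cases "(t',t) \<in> R")
    case True then show ?thesis using step.IH by (meson converse_rtrancl_into_rtrancl)
  next
    case False
    then have tt: "(t,t') \<in> R" using step.hyps(2) by auto
    then have "t \<noteq> e" using e by auto
    with step.IH obtain m where "(t,m) \<in> R" "(m,e) \<in> R\<^sup>*" by (metis converse_rtranclE)
    then show ?thesis using f tt by metis
  qed
qed

lemma bd_in_uniq:
  assumes "wf1 F" "connl F" "(u,v) \<in> bdarts F" "(u',v) \<in> bdarts F"
  shows "u = u'"
proof -
  let ?R = "link F v"
  have nd: "u \<notin> Domain ?R" "u' \<notin> Domain ?R" using assms by (auto simp: dom_link bdarts_iff)
  have n: "u \<in> nbr F v" "u' \<in> nbr F v" using assms by (auto simp: nbr_iff bdarts_iff)
  then have "(u,u') \<in> (?R \<union> ?R\<inverse>)\<^sup>*" using assms(2) unfolding connl_def by blast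
  then have "(u',u) \<in> ?R\<^sup>*" using sink_reach[of ?R u u'] nd link_fun[OF assms(1)] by blast
  then show ?thesis using nd(2) by (metis Domain.DomainI converse_rtranclE)
qed

lemma bd_out_uniq:
  assumes "wf1 F" "connl F" "(v,u) \<in> bdarts F" "(v,u') \<in> bdarts F"
  shows "u = u'"
proof -
  let ?R = "(link F v)\<inverse>"
  have nd: "u \<notin> Domain ?R" "u' \<notin> Domain ?R" using assms by (auto simp: ran_link bdarts_iff)
  have n: "u \<in> nbr F v" "u' \<in> nbr F v" using assms by (auto simp: nbr_iff bdarts_iff)
  then have "(u,u') \<in> (link F v \<union> (link F v)\<inverse>)\<^sup>*" using assms(2) unfolding connl_def by blast
  then have "(u,u') \<in> (?R \<union> ?R\<inverse>)\<^sup>*" by (simp add: Un_commute)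
  then have "(u',u) \<in> ?R\<^sup>*" using sink_reach[of ?R u u'] nd link_inj[OF assms(1)] by blast
  then show ?thesis using nd(2) by (metis Domain.DomainI converse_rtranclE)
qed

lemma sym_rt: "(x,y) \<in> (R \<union> R\<inverse>)\<^sup>* \<Longrightarrow> (y,x) \<in> (R \<union> R\<inverse>)\<^sup>*"
proof -
  assume "(x,y) \<in> (R \<union> R\<inverse>)\<^sup>*"
  then have "(y,x) \<in> ((R \<union> R\<inverse>)\<inverse>)\<^sup>*" by (simp add: rtrancl_converse)
  moreover have "(R \<union> R\<inverse>)\<inverse> = R \<union> R\<inverse>" by auto
  ultimately show ?thesis by simp
qed

lemma field_reach: "(u,t) \<in> (R \<union> R\<inverse>)\<^sup>* \<Longrightarrow> u \<in> Field R \<Longrightarrow> t \<in> Field R"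
  by (induction rule: rtrancl_induct) (auto simp: Field_def)

lemma split_reach:
  assumes "u \<in> Field R1" "(u,t) \<in> ((R1 \<union> R2) \<union> (R1 \<union> R2)\<inverse>)\<^sup>*"
  shows "(u,t) \<in> (R1 \<union> R1\<inverse>)\<^sup>* \<or> (\<exists>c \<in> Field R1 \<inter> Field R2. (u,c) \<in> (R1 \<union> R1\<inverse>)\<^sup>*)"
  using assms(2)
proof (induction rule: rtrancl_induct)
  case base then show ?case by simp
next
  case (step t t')
  show ?case
  proof (cases "(u,t) \<in> (R1 \<union> R1\<inverse>)\<^sup>*")
    case True
    note ut = True
    then have tf: "t \<in> Field R1" using field_reach assms(1) by metis
    show ?thesis
    proof (cases "(t,t') \<in> R1 \<union> R1\<inverse>")
      case True then show ?thesis using ut by (meson rtrancl.rtrancl_into_rtrancl)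
    next
      case False
      then have "(t,t') \<in> R2 \<union> R2\<inverse>" using step.hyps(2) by auto
      then have "t \<in> Field R2" by (auto simp: Field_def)
      then show ?thesis using tf ut by blast
    qed
  next
    case False then show ?thesis using step.IH by blast
  qed
qed

lemma split_conn:
  assumes conn: "\<forall>u\<in>Field (R1 \<union> R2). \<forall>w\<in>Field (R1 \<union> R2). (u,w) \<in> ((R1 \<union> R2) \<union> (R1 \<union> R2)\<inverse>)\<^sup>*"
    and uq: "\<And>c c'. c \<in> Field R1 \<inter> Field R2 \<Longrightarrow> c' \<in> Field R1 \<inter> Field R2 \<Longrightarrow> c = c'"
    and u: "u \<in> Field R1" and w: "w \<in> Field R1"
  shows "(u,w) \<in> (R1 \<union> R1\<inverse>)\<^sup>*"
proof -
  have fu: "u \<in> Field (R1 \<union> R2)" "w \<in> Field (R1 \<union> R2)" using u w by (auto simp: Field_def)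
  have A: "(u,w) \<in> (R1 \<union> R1\<inverse>)\<^sup>* \<or> (\<exists>c \<in> Field R1 \<inter> Field R2. (u,c) \<in> (R1 \<union> R1\<inverse>)\<^sup>*)"
    using split_reach[OF u] conn fu by blast
  have B: "(w,u) \<in> (R1 \<union> R1\<inverse>)\<^sup>* \<or> (\<exists>c \<in> Field R1 \<inter> Field R2. (w,c) \<in> (R1 \<union> R1\<inverse>)\<^sup>*)"
    using split_reach[OF w] conn fu by blast
  show ?thesis
  proof (cases "(u,w) \<in> (R1 \<union> R1\<inverse>)\<^sup>*")
    case True then show ?thesis .
  next
    case False
    then obtain c where c: "c \<in> Field R1 \<inter> Field R2" "(u,c) \<in> (R1 \<union> R1\<inverse>)\<^sup>*" using A by blast
    show ?thesis
    proof (cases "(w,u) \<in> (R1 \<union> R1\<inverse>)\<^sup>*")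
      case True then show ?thesis using sym_rt by metis
    next
      case False
      then obtain c' where c': "c' \<in> Field R1 \<inter> Field R2" "(w,c') \<in> (R1 \<union> R1\<inverse>)\<^sup>*" using B by blast
      have "c = c'" using uq c c' by blast
      then show ?thesis using c c' sym_rt by (metis rtrancl_trans)
    qed
  qed
qed

lemma split_disj:
  assumes conn: "\<forall>u\<in>Field (R1 \<union> R2). \<forall>w\<in>Field (R1 \<union> R2). (u,w) \<in> ((R1 \<union> R2) \<union> (R1 \<union> R2)\<inverse>)\<^sup>*"
    and d: "Field R1 \<inter> Field R2 = {}" and u: "u \<in> Field R1" and w: "w \<in> Field R2"
  shows False
proof -
  have fu: "u \<in> Field (R1 \<union> R2)" "w \<in> Field (R1 \<union> R2)" using u w by (auto simp: Field_def)
  then have "(u,w) \<in> (R1 \<union> R1\<inverse>)\<^sup>* \<or> (\<exists>c \<in> Field R1 \<inter> Field R2. (u,c) \<in> (R1 \<union> R1\<inverse>)\<^sup>*)"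
    using split_reach[OF u] conn by blast
  then show False using d field_reach[of u w R1] u w by blast
qed

lemma nbr_edge: "u \<in> nbr F v \<Longrightarrow> {v,u} \<in> edges F"
  by (auto simp: nbr_iff edges_iff insert_commute)
lemma nbr_neq: "wf1 F \<Longrightarrow> u \<in> nbr F v \<Longrightarrow> u \<noteq> v"
  by (auto simp: nbr_iff darts_iff dest: wf1_dist)
lemma dart_verts: "wf1 F \<Longrightarrow> (u,v) \<in> darts F \<Longrightarrow> u \<in> verts F \<and> v \<in> verts F"
  by (auto simp: darts_iff verts_iff dest: wf1_rot)
lemma edge_verts: "wf1 F \<Longrightarrow> {u,v} \<in> edges F \<Longrightarrow> u \<in> verts F \<and> v \<in> verts F"
proof -
  assume w: "wf1 F" and "{u,v} \<in> edges F"
  then obtain a b where ab: "{u,v} = {a,b}" "(a,b) \<in> darts F" by (auto simp: edges_iff)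
  then have "a \<in> verts F" "b \<in> verts F" using dart_verts[OF w] by auto
  moreover have "u \<in> {a,b}" "v \<in> {a,b}" using ab(1) by (metis insertI1 insert_commute)+
  ultimately show ?thesis by auto
qed
lemma verts_nbr: "v \<in> verts F \<Longrightarrow> \<exists>u. u \<in> nbr F v"
  by (auto simp: verts_iff nbr_iff darts_iff)

lemma link_Un: "link (F1 \<union> F2) v = link F1 v \<union> link F2 v"
  by (auto simp: link_def)
lemma darts_Un: "darts (F1 \<union> F2) = darts F1 \<union> darts F2"
  by (auto simp: darts_def)
lemma edges_Un: "edges (F1 \<union> F2) = edges F1 \<union> edges F2"
  by (auto simp: edges_def darts_Un)
lemma verts_Un: "verts (F1 \<union> F2) = verts F1 \<union> verts F2"
  by (auto simp: verts_def)

lemma split_inv: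
  assumes I: "Inv T F" and F: "F = F1 \<union> F2" and r1: "rot_closed F1" and r2: "rot_closed F2"
    and E: "edges F1 \<inter> edges F2 \<subseteq> {{x,y}}"
  shows "Inv T F1"
proof -
  have w: "wf1 F" "notwin F" "connl F" "F \<subseteq> T" using I by (auto simp: Inv_def)
  have w1: "wf1 F1" using wf1_subset[OF w(1) _ r1] F by blast
  have w2: "wf1 F2" using wf1_subset[OF w(1) _ r2] F by blast
  have "connl F1"
    unfolding connl_def
  proof (intro allI ballI)
    fix v u w' assume u: "u \<in> nbr F1 v" and w': "w' \<in> nbr F1 v"
    let ?R1 = "link F1 v" and ?R2 = "link F2 v"
    have L: "link F v = ?R1 \<union> ?R2" using F by (simp add: link_Un)
    have conn0: "\<forall>u\<in>nbr F v. \<forall>w\<in>nbr F v. (u,w) \<in> (link F v \<union> (link F v)\<inverse>)\<^sup>*"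
      using w(3) unfolding connl_def by (rule spec)
    have conn: "\<forall>u\<in>Field (?R1 \<union> ?R2). \<forall>w\<in>Field (?R1 \<union> ?R2). (u,w) \<in> ((?R1 \<union> ?R2) \<union> (?R1 \<union> ?R2)\<inverse>)\<^sup>*"
      using conn0 unfolding nbr_field[OF w(1)] L .
    have uq: "c = c'" if c: "c \<in> Field ?R1 \<inter> Field ?R2" and c': "c' \<in> Field ?R1 \<inter> Field ?R2" for c c'
    proof -
      have a: "c \<in> nbr F1 v" "c \<in> nbr F2 v" "c' \<in> nbr F1 v" "c' \<in> nbr F2 v"
        using c c' unfolding nbr_field[OF w1] nbr_field[OF w2] by auto
      have "{v,c} \<in> edges F1 \<inter> edges F2" using nbr_edge[OF a(1)] nbr_edge[OF a(2)] by blast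
      then have e1: "{v,c} = {x,y}" using E by blast
      have "{v,c'} \<in> edges F1 \<inter> edges F2" using nbr_edge[OF a(3)] nbr_edge[OF a(4)] by blast
      then have e2: "{v,c'} = {x,y}" using E by blast
      have "c \<noteq> v" "c' \<noteq> v" using nbr_neq[OF w1] a by auto
      then show ?thesis using e1 e2 by (metis doubleton_eq_iff)
    qed
    show "(u, w') \<in> (?R1 \<union> ?R1\<inverse>)\<^sup>*"
      using split_conn[OF conn uq] u w' unfolding nbr_field[OF w1] by blast
  qed
  moreover have "notwin F1" using w(2) F unfolding notwin_def by blast
  moreover have "F1 \<subseteq> T" using w(4) F by blast
  ultimately show ?thesis using w1 unfolding Inv_def by blast
qed

lemma Pr_D1: assumes "Pr F v1 v2 Os" "p \<in> Os" shows "{fst p, snd p} \<in> edges F - {{v1,v2}}"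
proof -
  have "\<forall>p\<in>Os. {fst p, snd p} \<in> edges F - {{v1,v2}}" using assms(1) unfolding Pr_def by (rule conjunct1)
  then show ?thesis using assms(2) by (rule bspec)
qed
lemma Pr_D2: assumes "Pr F v1 v2 Os" "e \<in> edges F - {{v1,v2}}" shows "\<exists>!p. p \<in> Os \<and> {fst p, snd p} = e"
proof -
  have "\<forall>e\<in>edges F - {{v1,v2}}. \<exists>!p. p \<in> Os \<and> {fst p, snd p} = e"
    using assms(1) unfolding Pr_def by (metis (no_types, lifting))
  then show ?thesis using assms(2) by (rule bspec)
qed
lemma Pr_D3: assumes "Pr F v1 v2 Os" "v \<in> verts F" shows
   "card {u. (u,v) \<in> Os} = (if v \<in> bverts F then (if v = v1 \<or> v = v2 then 0 else 2) else 3)"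
proof -
  have "\<forall>v\<in>verts F. card {u. (u,v) \<in> Os} = (if v \<in> bverts F then (if v = v1 \<or> v = v2 then 0 else 2) else 3)"
    using assms(1) unfolding Pr_def by (metis (no_types, lifting))
  then show ?thesis using assms(2) by (rule bspec)
qed
lemma Pr_in_verts: "wf1 F \<Longrightarrow> Pr F v1 v2 Os \<Longrightarrow> (u,v) \<in> Os \<Longrightarrow> u \<in> verts F \<and> v \<in> verts F"
  using Pr_D1[of F v1 v2 Os "(u,v)"] edge_verts[of F u v] by auto
lemma verts_sub: "verts F \<subseteq> fst ` F"
proof
  fix a assume "a \<in> verts F"
  then obtain b c where "(a,b,c) \<in> F" by (auto simp: verts_iff)
  then show "a \<in> fst ` F" by (metis fst_conv image_eqI)
qed
lemma finite_verts: "wf1 F \<Longrightarrow> finite (verts F)"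
  using verts_sub wf1_fin finite_subset by (metis finite_imageI)
lemma Pr_fin: "wf1 F \<Longrightarrow> Pr F v1 v2 Os \<Longrightarrow> finite {u. (u,v) \<in> Os}"
proof -
  assume a: "wf1 F" "Pr F v1 v2 Os"
  have "{u. (u,v) \<in> Os} \<subseteq> verts F" using Pr_in_verts[OF a] by blast
  then show ?thesis using finite_verts[OF a(1)] finite_subset by blast
qed
lemma Pr_zero: "wf1 F \<Longrightarrow> Pr F v1 v2 Os \<Longrightarrow> v \<in> verts F \<Longrightarrow> v \<in> bverts F \<Longrightarrow> v = v1 \<or> v = v2
   \<Longrightarrow> {u. (u,v) \<in> Os} = {}"
  using Pr_D3[of F v1 v2 Os v] Pr_fin[of F v1 v2 Os v] by simp

lemma bverts_transfer:
  assumes "F = F1 \<union> F2" "wf1 F2" "v \<notin> verts F2"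
  shows "v \<in> bverts F \<longleftrightarrow> v \<in> bverts F1"
proof -
  have a: "(v,u) \<notin> darts F2" for u using assms(2,3) dart_verts by metis
  have b: "(u,v) \<notin> darts F2" for u using assms(2,3) dart_verts by metis
  have "(v,u) \<in> bdarts F \<longleftrightarrow> (v,u) \<in> bdarts F1" for u
    using a b unfolding bdarts_iff assms(1) darts_Un by blast
  then show ?thesis unfolding bverts_iff by blast
qed

lemma chord_Pr:
  assumes I: "Inv T F" and b12: "(v1,v2) \<in> bdarts F" and ch: "is_chord F x y"
    and F: "F = F1 \<union> F2" and dj: "F1 \<inter> F2 = {}" and r1: "rot_closed F1" and r2: "rot_closed F2"
    and E: "edges F1 \<inter> edges F2 = {{x,y}}"
    and b12': "(v1,v2) \<in> bdarts F1" and bxy: "(x,y) \<in> bdarts F2"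
    and P1: "Pr F1 v1 v2 O1" and P2: "Pr F2 x y O2"
  shows "Pr F v1 v2 (O1 \<union> O2)"
proof -
  have w: "wf1 F" "notwin F" "connl F" "F \<subseteq> T" using I unfolding Inv_def by blast+
  have w1: "wf1 F1" using wf1_subset[OF w(1) _ r1] F by blast
  have w2: "wf1 F2" using wf1_subset[OF w(1) _ r2] F by blast
  have E': "edges F1 \<inter> edges F2 \<subseteq> {{x,y}}" using E by blast
  have I1: "Inv T F1" using split_inv[OF I F r1 r2 E'] .
  have E'': "edges F2 \<inter> edges F1 \<subseteq> {{x,y}}" using E by blast
  have F': "F = F2 \<union> F1" using F by blast
  have I2: "Inv T F2" using split_inv[OF I F' r2 r1 E''] .
  have c1: "connl F1" "connl F2" using I1 I2 unfolding Inv_def by blast+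
  have chx: "x \<in> bverts F" "y \<in> bverts F" "{x,y} \<in> edges F" "(x,y) \<notin> bdarts F" "(y,x) \<notin> bdarts F"
    using ch unfolding is_chord_def by blast+
  have dxy: "(x,y) \<in> darts F" "(y,x) \<in> darts F"
  proof -
    obtain a b where ab: "{x,y} = {a,b}" "(a,b) \<in> darts F" using chx(3) by (auto simp: edges_iff)
    have "(x,y) \<in> darts F \<or> (y,x) \<in> darts F" using ab by (metis doubleton_eq_iff)
    then show "(x,y) \<in> darts F" "(y,x) \<in> darts F" using chx(4,5) unfolding bdarts_iff by blast+
  qed
  have xy2: "(x,y) \<in> darts F2" "(y,x) \<notin> darts F2" using bxy unfolding bdarts_iff by blast+
  have xy1: "(x,y) \<notin> darts F1"
  proof
    assume "(x,y) \<in> darts F1"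
    then obtain c1 where "(x,y,c1) \<in> F1" by (auto simp: darts_iff)
    moreover obtain c2 where "(x,y,c2) \<in> F2" using xy2 by (auto simp: darts_iff)
    ultimately show False using wf1_uniq[OF w(1)] F dj by blast
  qed
  have yx1: "(y,x) \<in> darts F1" using dxy(2) xy2(2) unfolding F darts_Un by blast
  have byx1: "(y,x) \<in> bdarts F1" using yx1 xy1 unfolding bdarts_iff by blast
  have xyE1: "{x,y} \<in> edges F1" using yx1 unfolding edges_iff by (metis insert_commute)
  have v12E1: "{v1,v2} \<in> edges F1" using b12' unfolding edges_iff bdarts_iff by blast
  have ne: "{v1,v2} \<noteq> {x,y}"
  proof
    assume "{v1,v2} = {x,y}"
    then have "(x,y) = (v1,v2) \<or> (y,x) = (v1,v2)" by (metis doubleton_eq_iff)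
    then show False using b12 chx(4,5) by blast
  qed
  have vv1: "v1 \<in> verts F1" "v2 \<in> verts F1" using b12' dart_verts[OF w1] unfolding bdarts_iff by blast+
  have xv: "x \<in> verts F1" "y \<in> verts F1" "x \<in> verts F2" "y \<in> verts F2"
    using yx1 xy2(1) dart_verts[OF w1] dart_verts[OF w2] by blast+
  have xb: "x \<in> bverts F1" "y \<in> bverts F1" "x \<in> bverts F2" "y \<in> bverts F2"
    using byx1 bxy in_bverts[OF w1] in_bverts[OF w2] unfolding bverts_iff by blast+
  have EF: "edges F = edges F1 \<union> edges F2" using F edges_Un by blast
  have EE: "e = {x,y}" if "e \<in> edges F1" "e \<in> edges F2" for e
  proof -
    have "e \<in> edges F1 \<inter> edges F2" using that by (rule IntI)
    then have "e \<in> {{x,y}}" by (simp only: E)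
    then show ?thesis by (rule singletonD)
  qed
  have A1: "\<forall>p\<in>O1 \<union> O2. {fst p, snd p} \<in> edges F - {{v1,v2}}"
  proof
    fix p assume p: "p \<in> O1 \<union> O2"
    show "{fst p, snd p} \<in> edges F - {{v1,v2}}"
    proof (cases "p \<in> O1")
      case True
      have "{fst p, snd p} \<in> edges F1 - {{v1,v2}}" using Pr_D1[OF P1 True] .
      then show ?thesis using EF by blast
    next
      case False
      then have "p \<in> O2" using p by blast
      then have a: "{fst p, snd p} \<in> edges F2 - {{x,y}}" using Pr_D1[OF P2] by simp
      have "{fst p, snd p} \<noteq> {v1,v2}"
      proof
        assume "{fst p, snd p} = {v1,v2}"
        then have "{v1,v2} \<in> edges F2" using a by (metis DiffD1)
        then have "{v1,v2} = {x,y}" using v12E1 EE by simp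
        then show False using ne by simp
      qed
      moreover have "{fst p, snd p} \<in> edges F" using a EF by simp
      ultimately show ?thesis by simp
    qed
  qed
  have A2: "\<forall>e\<in>edges F - {{v1,v2}}. \<exists>!p. p \<in> O1 \<union> O2 \<and> {fst p, snd p} = e"
  proof
    fix e assume e: "e \<in> edges F - {{v1,v2}}"
    show "\<exists>!p. p \<in> O1 \<union> O2 \<and> {fst p, snd p} = e"
    proof (cases "e \<in> edges F1")
      case True
      have e1: "e \<in> edges F1 - {{v1,v2}}" using True e by simp
      have "\<exists>!p. p \<in> O1 \<and> {fst p, snd p} = e" using Pr_D2[OF P1 e1] .
      then obtain p where P: "p \<in> O1 \<and> {fst p, snd p} = e" and U: "\<forall>q. q \<in> O1 \<and> {fst q, snd q} = e \<longrightarrow> q = p"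
        by (rule ex1E) iprover
      have n2: "q \<notin> O2" if "{fst q, snd q} = e" for q
      proof
        assume "q \<in> O2"
        then have "{fst q, snd q} \<in> edges F2 - {{x,y}}" using Pr_D1[OF P2] by simp
        then show False using EE[OF True] that by simp
      qed
      show ?thesis
      proof (rule ex1I[of _ p])
        show "p \<in> O1 \<union> O2 \<and> {fst p, snd p} = e" using P by simp
      next
        fix q assume q: "q \<in> O1 \<union> O2 \<and> {fst q, snd q} = e"
        then have "q \<in> O1" using n2[of q] by blast
        then show "q = p" using U q by blast
      qed
    next
      case False
      then have e2: "e \<in> edges F2 - {{x,y}}" using e EF xyE1 by blast
      have "\<exists>!p. p \<in> O2 \<and> {fst p, snd p} = e" using Pr_D2[OF P2 e2] .
      then obtain p where P: "p \<in> O2 \<and> {fst p, snd p} = e" and U: "\<forall>q. q \<in> O2 \<and> {fst q, snd q} = e \<longrightarrow> q = p"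
        by (rule ex1E) iprover
      have n1: "q \<notin> O1" if "{fst q, snd q} = e" for q
      proof
        assume "q \<in> O1"
        then have "{fst q, snd q} \<in> edges F1" using Pr_D1[OF P1] by simp
        then show False using False that by simp
      qed
      show ?thesis
      proof (rule ex1I[of _ p])
        show "p \<in> O1 \<union> O2 \<and> {fst p, snd p} = e" using P by simp
      next
        fix q assume q: "q \<in> O1 \<union> O2 \<and> {fst q, snd q} = e"
        then have "q \<in> O2" using n1[of q] by blast
        then show "q = p" using U q by blast
      qed
    qed
  qed
  have A3: "card {u. (u,v) \<in> O1 \<union> O2} = (if v \<in> bverts F then (if v = v1 \<or> v = v2 then 0 else 2) else 3)"
    if v: "v \<in> verts F" for v
  proof -
    have S: "{u. (u,v) \<in> O1 \<union> O2} = {u. (u,v) \<in> O1} \<union> {u. (u,v) \<in> O2}" by blast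
    show ?thesis
    proof (cases "v = x \<or> v = y")
      case True
      have z2: "{u. (u,v) \<in> O2} = {}" using Pr_zero[OF w2 P2] True xv xb by blast
      have "v \<in> bverts F" using True chx by blast
      moreover have vF1: "v \<in> verts F1" "v \<in> bverts F1" using True xv xb by blast+
      ultimately show ?thesis using Pr_D3[OF P1 vF1(1)] S z2 by simp
    next
      case False
      have vv: "v \<in> verts F1 \<or> v \<in> verts F2" using v unfolding F verts_Un by blast
      have notboth: "\<not> (v \<in> verts F1 \<and> v \<in> verts F2)"
      proof
        assume a: "v \<in> verts F1 \<and> v \<in> verts F2"
        let ?R1 = "link F1 v" and ?R2 = "link F2 v"
        have L: "link F v = ?R1 \<union> ?R2" using F by (simp add: link_Un)
        have conn0: "\<forall>u\<in>nbr F v. \<forall>w\<in>nbr F v. (u,w) \<in> (link F v \<union> (link F v)\<inverse>)\<^sup>*"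
          using w(3) unfolding connl_def by (rule spec)
        have conn: "\<forall>u\<in>Field (?R1 \<union> ?R2). \<forall>w\<in>Field (?R1 \<union> ?R2). (u,w) \<in> ((?R1 \<union> ?R2) \<union> (?R1 \<union> ?R2)\<inverse>)\<^sup>*"
          using conn0 unfolding nbr_field[OF w(1)] L .
        have dj: "Field ?R1 \<inter> Field ?R2 = {}"
        proof (rule ccontr)
          assume "Field ?R1 \<inter> Field ?R2 \<noteq> {}"
          then obtain c where c: "c \<in> nbr F1 v" "c \<in> nbr F2 v"
            unfolding nbr_field[OF w1] nbr_field[OF w2] by blast
          have "{v,c} = {x,y}" using EE[OF nbr_edge[OF c(1)] nbr_edge[OF c(2)]] .
          then have "v \<in> {x,y}" by (metis insertI1)
          then show False using False by simp
        qed
        obtain u1 where "u1 \<in> nbr F1 v" using verts_nbr[OF conjunct1[OF a]] by (elim exE)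
        then have u1: "u1 \<in> Field ?R1" unfolding nbr_field[OF w1] .
        obtain u2 where "u2 \<in> nbr F2 v" using verts_nbr[OF conjunct2[OF a]] by (elim exE)
        then have u2: "u2 \<in> Field ?R2" unfolding nbr_field[OF w2] .
        show False using split_disj[OF conn dj u1 u2] .
      qed
      show ?thesis
      proof (cases "v \<in> verts F1")
        case True
        then have n2: "v \<notin> verts F2" using notboth by blast
        have z2: "{u. (u,v) \<in> O2} = {}" using Pr_in_verts[OF w2 P2] n2 by blast
        have "v \<in> bverts F \<longleftrightarrow> v \<in> bverts F1" using bverts_transfer[OF F w2 n2] .
        then show ?thesis using Pr_D3[OF P1 True] S z2 by simp
      next
        case False
        then have n2: "v \<in> verts F2" using vv by blast
        have z1: "{u. (u,v) \<in> O1} = {}" using Pr_in_verts[OF w1 P1] False by blast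
        have "v \<in> bverts F \<longleftrightarrow> v \<in> bverts F2" using bverts_transfer[OF F' w1 False] .
        moreover have "v \<noteq> v1" "v \<noteq> v2" using vv1 False by blast+
        ultimately show ?thesis using Pr_D3[OF P2 n2] S z1 \<open>\<not> (v = x \<or> v = y)\<close> by simp
      qed
    qed
  qed
  have A3': "\<forall>v\<in>verts F. card {u. (u,v) \<in> O1 \<union> O2} = (if v \<in> bverts F then (if v = v1 \<or> v = v2 then 0 else 2) else 3)"
    by (rule ballI) (rule A3)
  show ?thesis unfolding Pr_def by (intro conjI; (rule A1 | rule A2 | rule A3'))
qed

definition rem :: "('v \<times> 'v \<times> 'v) set \<Rightarrow> 'v \<Rightarrow> ('v \<times> 'v \<times> 'v) set" where
  "rem F z = {t \<in> F. z \<notin> {fst t, fst (snd t), snd (snd t)}}"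

lemma rem_mem: "(a,b,c) \<in> rem F z \<longleftrightarrow> (a,b,c) \<in> F \<and> a \<noteq> z \<and> b \<noteq> z \<and> c \<noteq> z"
  by (auto simp: rem_def)

lemma wf_rem: "wf1 F \<Longrightarrow> wf1 (rem F z)"
proof -
  assume w: "wf1 F"
  have "rot_closed (rem F z)" unfolding rot_closed_def using wf1_rot[OF w] by (auto simp: rem_mem)
  moreover have "rem F z \<subseteq> F" by (auto simp: rem_def)
  ultimately show ?thesis using wf1_subset[OF w] by blast
qed

lemma darts_rem: "(a,b) \<in> darts (rem F z) \<Longrightarrow> (a,b) \<in> darts F \<and> a \<noteq> z \<and> b \<noteq> z"
  by (auto simp: darts_iff rem_mem)

lemma nz_verts: "z \<notin> verts (rem F z)"
  by (auto simp: verts_iff rem_mem)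

lemma edges_rem: "e \<in> edges (rem F z) \<Longrightarrow> e \<in> edges F \<and> z \<notin> e"
  by (auto simp: edges_iff dest: darts_rem)

lemma link_rem: "v \<noteq> z \<Longrightarrow> link (rem F z) v = {(a,b). (a,b) \<in> link F v \<and> a \<noteq> z \<and> b \<noteq> z}"
  by (auto simp: link_iff rem_mem)

lemma int_dart: "wf1 F \<Longrightarrow> v \<notin> bverts F \<Longrightarrow> u \<in> nbr F v \<Longrightarrow> (v,u) \<in> darts F \<and> (u,v) \<in> darts F"
proof -
  assume w: "wf1 F" and v: "v \<notin> bverts F" and u: "u \<in> nbr F v"
  have "\<not> (u,v) \<in> bdarts F" using in_bverts[OF w] v by blast
  moreover have "\<not> (v,u) \<in> bdarts F" using v unfolding bverts_iff by blast
  ultimately show ?thesis using u unfolding nbr_iff bdarts_iff by blast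
qed

lemma avoid_start: "(a,b) \<in> R\<^sup>* \<Longrightarrow> (a,b) \<in> {(x,y). (x,y) \<in> R \<and> y \<noteq> a}\<^sup>*"
proof (induction rule: rtrancl_induct)
  case base then show ?case by simp
next
  case (step y z)
  show ?case
  proof (cases "z = a")
    case True then show ?thesis by simp
  next
    case False
    then have "(y,z) \<in> {(x,y). (x,y) \<in> R \<and> y \<noteq> a}" using step.hyps(2) by simp
    then show ?thesis using step.IH by (meson rtrancl.rtrancl_into_rtrancl)
  qed
qed

lemma leaf_path:
  assumes p: "(u,t) \<in> (R \<union> R\<inverse>)\<^sup>*" and u: "u \<noteq> z"
    and lf: "\<And>x y. (z,x) \<in> R \<union> R\<inverse> \<Longrightarrow> (z,y) \<in> R \<union> R\<inverse> \<Longrightarrow> x = y"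
    and that: "R' = {(a,b). (a,b) \<in> R \<and> a \<noteq> z \<and> b \<noteq> z}"
  shows "(t \<noteq> z \<longrightarrow> (u,t) \<in> (R' \<union> R'\<inverse>)\<^sup>*) \<and> (t = z \<longrightarrow> (\<exists>p. (z,p) \<in> R \<union> R\<inverse> \<and> (u,p) \<in> (R' \<union> R'\<inverse>)\<^sup>*))"
  using p
proof (induction rule: rtrancl_induct)
  case base then show ?case using u by simp
next
  case (step t t')
  show ?case
  proof (cases "t = z")
    case True
    then obtain p where p: "(z,p) \<in> R \<union> R\<inverse>" "(u,p) \<in> (R' \<union> R'\<inverse>)\<^sup>*" using step.IH by blast
    show ?thesis
    proof (cases "t' = z")
      case True then show ?thesis using p by blast
    next
      case False
      have "t' = p" using lf p(1) step.hyps(2) True by blast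
      then show ?thesis using p False by blast
    qed
  next
    case False
    then have ut: "(u,t) \<in> (R' \<union> R'\<inverse>)\<^sup>*" using step.IH by blast
    show ?thesis
    proof (cases "t' = z")
      case True
      have "(z,t) \<in> R \<union> R\<inverse>" using step.hyps(2) True by blast
      then show ?thesis using ut True by blast
    next
      case f2: False
      have "(t,t') \<in> R' \<union> R'\<inverse>" using step.hyps(2) False f2 that by blast
      then show ?thesis using ut f2 by (meson rtrancl.rtrancl_into_rtrancl)
    qed
  qed
qed

locale oc =
  fixes T :: "('v \<times> 'v \<times> 'v) set" and F v1 v2 z
  assumes I: "Inv T F" and Tk: "Tok T" and b12: "(v1,v2) \<in> bdarts F"
    and nc: "\<not> (\<exists>x y. is_chord F x y)" and b2z: "(v2,z) \<in> bdarts F"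
begin

lemma w: "wf1 F" "notwin F" "connl F" "F \<subseteq> T" using I unfolding Inv_def by blast+

lemma wT: "wf1 T" using Tk unfolding Tok_def by blast
lemma TR: "(v,u) \<in> darts T \<Longrightarrow> (v,u') \<in> darts T \<Longrightarrow> (u,u') \<in> (link T v)\<^sup>*"
  using Tk unfolding Tok_def by blast

lemma bd_edge: assumes "u \<in> bverts F" "u' \<in> bverts F" "(u,u') \<in> darts F" shows "(u',u) \<notin> darts F"
proof
  assume a: "(u',u) \<in> darts F"
  have "{u,u'} \<in> edges F" using assms(3) unfolding edges_iff by blast
  moreover have "(u,u') \<notin> bdarts F" "(u',u) \<notin> bdarts F" using a assms(3) unfolding bdarts_iff by blast+
  ultimately have "is_chord F u u'" using assms(1,2) unfolding is_chord_def by blast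
  then show False using nc by blast
qed

lemma zb: "z \<in> bverts F" using in_bverts[OF w(1) b2z] .
lemma v1b: "v1 \<in> bverts F" using b12 unfolding bverts_iff by blast
lemma v2b: "v2 \<in> bverts F" using in_bverts[OF w(1) b12] .
lemma zne: "z \<noteq> v1" "z \<noteq> v2" "v1 \<noteq> v2"
proof -
  show "z \<noteq> v1" using b12 b2z unfolding bdarts_iff by blast
  show "z \<noteq> v2" using b2z wf1_dist[OF w(1)] unfolding bdarts_iff darts_iff by blast
  show "v1 \<noteq> v2" using b12 wf1_dist[OF w(1)] unfolding bdarts_iff darts_iff by blast
qed
lemma in_z: "(u,z) \<in> bdarts F \<Longrightarrow> u = v2" using bd_in_uniq[OF w(1) w(3) _ b2z] by blast
lemma in_v2: "(u,v2) \<in> bdarts F \<Longrightarrow> u = v1" using bd_in_uniq[OF w(1) w(3) _ b12] by blast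
lemma ex_w: "\<exists>w. (z,w) \<in> bdarts F" using bd_out_in[OF w(1)] b2z by blast

lemma z_in2: "card {u. (u,z) \<in> bdarts F \<or> (z,u) \<in> bdarts F} = 2"
proof -
  obtain w where zw: "(z,w) \<in> bdarts F" using ex_w by blast
  have "{u. (u,z) \<in> bdarts F \<or> (z,u) \<in> bdarts F} = {v2, w}"
    using in_z bd_out_uniq[OF w(1) w(3) zw] zw b2z by blast
  moreover have "v2 \<noteq> w" using zw b2z unfolding bdarts_iff by blast
  ultimately show ?thesis by simp
qed

lemma OA_z: "{u. (u,z) \<in> orient_at F z} = {u. (u,z) \<in> bdarts F \<or> (z,u) \<in> bdarts F}"
proof -
  have "(u,z) \<in> orient_at F z \<longleftrightarrow> (u,z) \<in> bdarts F \<or> (z,u) \<in> bdarts F" for u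
  proof
    assume "(u,z) \<in> orient_at F z"
    then have "({u,z} \<in> edges F \<and> ((u,z) \<in> bdarts F \<or> (z,u) \<in> bdarts F)) \<or> (u = z \<and> {z,z} \<in> edges F)"
      unfolding orient_at_def by blast
    moreover have "{z,z} \<notin> edges F"
    proof
      assume "{z,z} \<in> edges F"
      then obtain a b where "{z,z} = {a,b}" "(a,b) \<in> darts F" unfolding edges_iff by blast
      then show False using wf1_dist[OF w(1)] unfolding darts_iff by (metis doubleton_eq_iff)
    qed
    ultimately show "(u,z) \<in> bdarts F \<or> (z,u) \<in> bdarts F" by blast
  next
    assume a: "(u,z) \<in> bdarts F \<or> (z,u) \<in> bdarts F"
    then have "{u,z} \<in> edges F" unfolding edges_iff bdarts_iff by (metis insert_commute)
    then show "(u,z) \<in> orient_at F z" using a unfolding orient_at_def by blast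
  qed
  then show ?thesis by blast
qed

lemma OA_other: "v \<noteq> z \<Longrightarrow> {u. (u,v) \<in> orient_at F z} =
   (if {v,z} \<in> edges F \<and> (v,z) \<notin> bdarts F \<and> (z,v) \<notin> bdarts F then {z} else {})"
  unfolding orient_at_def by (auto simp: insert_commute)

lemma OA_edge: "p \<in> orient_at F z \<Longrightarrow> {fst p, snd p} \<in> edges F \<and> z \<in> {fst p, snd p}"
  unfolding orient_at_def by (auto simp: insert_commute)

lemma OA_uniq: assumes e: "{u,z} \<in> edges F" shows "\<exists>!p. p \<in> orient_at F z \<and> {fst p, snd p} = {u,z}"
proof -
  have uz: "u \<noteq> z"
  proof
    assume "u = z"
    then obtain a b where "{z,z} = {a,b}" "(a,b) \<in> darts F" using e unfolding edges_iff by blast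
    then show False using wf1_dist[OF w(1)] unfolding darts_iff by (metis doubleton_eq_iff)
  qed
  have k: "p \<in> orient_at F z \<and> {fst p, snd p} = {u,z} \<longleftrightarrow>
     (p = (u,z) \<and> ((u,z) \<in> bdarts F \<or> (z,u) \<in> bdarts F)) \<or> (p = (z,u) \<and> (u,z) \<notin> bdarts F \<and> (z,u) \<notin> bdarts F)" for p
  proof
    assume a: "p \<in> orient_at F z \<and> {fst p, snd p} = {u,z}"
    then consider u' where "p = (u',z)" "{u',z} \<in> edges F" "(u',z) \<in> bdarts F \<or> (z,u') \<in> bdarts F"
      | u' where "p = (z,u')" "{u',z} \<in> edges F" "(u',z) \<notin> bdarts F" "(z,u') \<notin> bdarts F"
      unfolding orient_at_def by blast
    then show "(p = (u,z) \<and> ((u,z) \<in> bdarts F \<or> (z,u) \<in> bdarts F)) \<or> (p = (z,u) \<and> (u,z) \<notin> bdarts F \<and> (z,u) \<notin> bdarts F)"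
    proof cases
      case 1
      then have "{u',z} = {u,z}" using a by simp
      then have "u' = u" using uz by (metis doubleton_eq_iff)
      then show ?thesis using 1 by blast
    next
      case 2
      then have "{z,u'} = {u,z}" using a by simp
      then have "u' = u" using uz by (metis doubleton_eq_iff)
      then show ?thesis using 2 by blast
    qed
  next
    assume "(p = (u,z) \<and> ((u,z) \<in> bdarts F \<or> (z,u) \<in> bdarts F)) \<or> (p = (z,u) \<and> (u,z) \<notin> bdarts F \<and> (z,u) \<notin> bdarts F)"
    then show "p \<in> orient_at F z \<and> {fst p, snd p} = {u,z}"
      using e unfolding orient_at_def by (auto simp: insert_commute)
  qed
  show ?thesis unfolding k by blast
qed

lemma bound_no_in: assumes "v \<noteq> z" "v \<in> bverts F" shows "{u. (u,v) \<in> orient_at F z} = {}"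
proof -
  have "\<not> ({v,z} \<in> edges F \<and> (v,z) \<notin> bdarts F \<and> (z,v) \<notin> bdarts F)"
  proof
    assume a: "{v,z} \<in> edges F \<and> (v,z) \<notin> bdarts F \<and> (z,v) \<notin> bdarts F"
    then have "(v,z) \<in> darts F \<or> (z,v) \<in> darts F" unfolding edges_iff by (metis doubleton_eq_iff)
    then show False using a bd_edge[OF assms(2) zb] bd_edge[OF zb assms(2)] unfolding bdarts_iff by blast
  qed
  then show ?thesis using OA_other[OF assms(1)] by simp
qed

lemma int_in: assumes "v \<noteq> z" "v \<notin> bverts F"
  shows "{u. (u,v) \<in> orient_at F z} = (if z \<in> nbr F v then {z} else {})"
proof (cases "z \<in> nbr F v")
  case True
  then have "(v,z) \<in> darts F" "(z,v) \<in> darts F" using int_dart[OF w(1) assms(2)] by blast+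
  moreover have "{v,z} \<in> edges F" using nbr_edge[OF True] .
  ultimately show ?thesis using OA_other[OF assms(1)] True unfolding bdarts_iff by simp
next
  case False
  then have "{v,z} \<notin> edges F" unfolding edges_iff nbr_iff by (metis doubleton_eq_iff)
  then show ?thesis using OA_other[OF assms(1)] False by simp
qed

end

lemma rt_sym: "(a,b) \<in> R\<^sup>* \<Longrightarrow> (a,b) \<in> (R \<union> R\<inverse>)\<^sup>*"
  using rtrancl_mono[of R "R \<union> R\<inverse>"] by blast

context oc begin

lemma wr: "wf1 (rem F z)" using wf_rem[OF w(1)] .

lemma nbr_rem: "u \<in> nbr (rem F z) v \<Longrightarrow> u \<in> nbr F v \<and> u \<noteq> z \<and> v \<noteq> z"
  unfolding nbr_iff using darts_rem by metis

lemma conn_rem: "connl (rem F z)"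
  unfolding connl_def
proof (intro allI ballI)
  fix v u u' assume u: "u \<in> nbr (rem F z) v" and u': "u' \<in> nbr (rem F z) v"
  let ?L = "link F v" and ?L' = "link (rem F z) v"
  have uu: "u \<in> nbr F v" "u \<noteq> z" "v \<noteq> z" "u' \<in> nbr F v" "u' \<noteq> z" using nbr_rem u u' by blast+
  have L': "?L' = {(a,b). (a,b) \<in> ?L \<and> a \<noteq> z \<and> b \<noteq> z}" using link_rem[OF uu(3)] .
  have cF: "(u,u') \<in> (?L \<union> ?L\<inverse>)\<^sup>*" using w(3) uu(1,4) unfolding connl_def by blast
  show "(u,u') \<in> (?L' \<union> ?L'\<inverse>)\<^sup>*"
  proof (cases "z \<in> nbr F v")
    case False
    have "?L' = ?L"
    proof -
      have "(a,b) \<in> ?L \<Longrightarrow> a \<noteq> z \<and> b \<noteq> z" for a b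
        using False unfolding nbr_field[OF w(1)] by (auto simp: Field_def)
      then show ?thesis unfolding L' by blast
    qed
    then show ?thesis using cF by simp
  next
    case zn: True
    show ?thesis
    proof (cases "v \<in> bverts F")
      case True
      have lf: "x = y" if h: "(z,x) \<in> ?L \<union> ?L\<inverse>" "(z,y) \<in> ?L \<union> ?L\<inverse>" for x y
      proof -
        have d1: "(v,z) \<in> darts F" if "(z,x) \<in> ?L" for x using that unfolding link_iff darts_iff by blast
        have d2: "(z,v) \<in> darts F" if "(x,z) \<in> ?L" for x
          using that wf1_rot2[OF w(1)] unfolding link_iff darts_iff by blast
        have nb: "\<not> ((v,z) \<in> darts F \<and> (z,v) \<in> darts F)" using bd_edge[OF True zb] by blast
        consider "(z,x) \<in> ?L" "(z,y) \<in> ?L" | "(x,z) \<in> ?L" "(y,z) \<in> ?L"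
          | "(z,x) \<in> ?L" "(y,z) \<in> ?L" | "(x,z) \<in> ?L" "(z,y) \<in> ?L" using h by blast
        then show ?thesis
        proof cases
          case 1 then show ?thesis using link_fun[OF w(1)] by blast
        next
          case 2 then show ?thesis using link_inj[OF w(1)] by blast
        next
          case 3 then show ?thesis using d1 d2 nb by blast
        next
          case 4 then show ?thesis using d1 d2 nb by blast
        qed
      qed
      show ?thesis using leaf_path[OF cF uu(2) lf L'] uu(5) by blast
    next
      case False
      have idt: "(v,t) \<in> darts F" if "t \<in> nbr F v" for t using int_dart[OF w(1) False that] by blast
      obtain r where vzr: "(v,z,r) \<in> F" using idt[OF zn] unfolding darts_iff by blast
      have rn: "r \<in> nbr F v" using wf1_rot2[OF w(1) vzr] unfolding nbr_iff darts_iff by blast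
      have rz: "r \<noteq> z" using wf1_dist[OF w(1) vzr] by blast
      have zr: "(z,r) \<in> ?L" using vzr unfolding link_iff .
      have main: "t \<in> nbr F v \<and> (t \<noteq> z \<longrightarrow> (r,t) \<in> ?L'\<^sup>*)"
        if "(r,t) \<in> {(x,y). (x,y) \<in> link T v \<and> y \<noteq> r}\<^sup>*" for t
        using that
      proof (induction rule: rtrancl_induct)
        case base then show ?case using rn by simp
      next
        case (step t t')
        have tn: "t \<in> nbr F v" using step.IH by blast
        obtain c where vtc: "(v,t,c) \<in> F" using idt[OF tn] unfolding darts_iff by blast
        have "(v,t,t') \<in> T" using step.hyps(2) unfolding link_iff by blast
        then have "c = t'" using wf1_uniq[OF wT] vtc w(4) by blast
        then have tt: "(t,t') \<in> ?L" using vtc unfolding link_iff by simp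
        have t'n: "t' \<in> nbr F v" using tt unfolding nbr_field[OF w(1)] by (auto simp: Field_def)
        have "(r,t') \<in> ?L'\<^sup>*" if t'z: "t' \<noteq> z"
        proof -
          have "t \<noteq> z"
          proof
            assume "t = z"
            then have "t' = r" using link_fun[OF w(1) tt] zr by blast
            then show False using step.hyps(2) by blast
          qed
          then have "(r,t) \<in> ?L'\<^sup>*" using step.IH by blast
          moreover have "(t,t') \<in> ?L'" using tt \<open>t \<noteq> z\<close> t'z unfolding L' by blast
          ultimately show ?thesis by (rule rtrancl.rtrancl_into_rtrancl)
        qed
        then show ?case using t'n by blast
      qed
      have reach: "(r,t) \<in> ?L'\<^sup>*" if "t \<in> nbr F v" "t \<noteq> z" for t
      proof -
        have "(v,r) \<in> darts T" "(v,t) \<in> darts T" using idt[OF rn] idt[OF that(1)] w(4) unfolding darts_iff by blast+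
        then have "(r,t) \<in> (link T v)\<^sup>*" by (rule TR)
        then have "(r,t) \<in> {(x,y). (x,y) \<in> link T v \<and> y \<noteq> r}\<^sup>*" by (rule avoid_start)
        then show ?thesis using main[of t] that(2) by blast
      qed
      have "(r,u) \<in> (?L' \<union> ?L'\<inverse>)\<^sup>*" using rt_sym[OF reach[OF uu(1,2)]] .
      moreover have "(r,u') \<in> (?L' \<union> ?L'\<inverse>)\<^sup>*" using rt_sym[OF reach[OF uu(4,5)]] .
      ultimately show ?thesis using sym_rt rtrancl_trans by metis
    qed
  qed
qed

lemma Inv_rem: "Inv T (rem F z)"
proof -
  have "notwin (rem F z)" using w(2) unfolding notwin_def rem_def by blast
  moreover have "rem F z \<subseteq> T" using w(4) unfolding rem_def by blast
  ultimately show ?thesis unfolding Inv_def using wr conn_rem by blast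
qed

end

context oc begin

lemma edge_keep: assumes e: "e \<in> edges F" "z \<notin> e" "e \<noteq> {v1,v2}" shows "e \<in> edges (rem F z)"
proof -
  obtain s t where st: "e = {s,t}" "(s,t) \<in> darts F" using e(1) unfolding edges_iff by blast
  have sz: "s \<noteq> z" "t \<noteq> z" using st(1) e(2) by blast+
  obtain c where stc: "(s,t,c) \<in> F" using st(2) unfolding darts_iff by blast
  show ?thesis
  proof (cases "c = z")
    case False
    then have "(s,t,c) \<in> rem F z" using stc sz unfolding rem_mem by blast
    then have "(s,t) \<in> darts (rem F z)" unfolding darts_iff by blast
    then show ?thesis using st(1) unfolding edges_iff by blast
  next
    case True
    show ?thesis
    proof (cases "(t,s) \<in> darts F")
      case True2: True
      then obtain c' where tsc: "(t,s,c') \<in> F" unfolding darts_iff by blast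
      have "c' \<noteq> z"
      proof
        assume "c' = z"
        then have "(z,t,s) \<in> F" "(z,s,t) \<in> F" using tsc stc True wf1_rot2[OF w(1)] by blast+
        then show False using w(2) unfolding notwin_def by blast
      qed
      then have "(t,s,c') \<in> rem F z" using tsc sz unfolding rem_mem by blast
      then have "(t,s) \<in> darts (rem F z)" unfolding darts_iff by blast
      then show ?thesis using st(1) unfolding edges_iff by (metis insert_commute)
    next
      case False
      then have bst: "(s,t) \<in> bdarts F" using st(2) unfolding bdarts_iff by blast
      have tb: "t \<in> bverts F" using in_bverts[OF w(1) bst] .
      have "(t,z,s) \<in> F" using wf1_rot[OF w(1) stc] True by simp
      then have tz: "(t,z) \<in> darts F" unfolding darts_iff by blast
      then have "(z,t) \<notin> darts F" using bd_edge[OF tb zb] by blast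
      then have "(t,z) \<in> bdarts F" using tz unfolding bdarts_iff by blast
      then have "t = v2" by (rule in_z)
      then have "s = v1" using in_v2 bst by blast
      then show ?thesis using e(3) st(1) \<open>t = v2\<close> by blast
    qed
  qed
qed

lemma vcase_i: assumes "v \<in> verts F" "v \<noteq> z" "z \<notin> nbr F v"
  shows "v \<in> verts (rem F z) \<and> (v \<in> bverts (rem F z) \<longleftrightarrow> v \<in> bverts F)"
proof -
  have k1: "(v,u) \<in> darts (rem F z)" if h: "(v,u) \<in> darts F" for u
  proof -
    obtain c where vuc: "(v,u,c) \<in> F" using h unfolding darts_iff by blast
    have "u \<in> nbr F v" using h unfolding nbr_iff by blast
    moreover have "c \<in> nbr F v" using wf1_rot2[OF w(1) vuc] unfolding nbr_iff darts_iff by blast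
    ultimately have "u \<noteq> z" "c \<noteq> z" using assms(3) by blast+
    then have "(v,u,c) \<in> rem F z" using vuc assms(2) unfolding rem_mem by blast
    then show ?thesis unfolding darts_iff by blast
  qed
  have k2: "(u,v) \<in> darts (rem F z)" if h: "(u,v) \<in> darts F" for u
  proof -
    obtain c where uvc: "(u,v,c) \<in> F" using h unfolding darts_iff by blast
    have "u \<in> nbr F v" using h unfolding nbr_iff by blast
    moreover have "c \<in> nbr F v" using wf1_rot[OF w(1) uvc] unfolding nbr_iff darts_iff by blast
    ultimately have "u \<noteq> z" "c \<noteq> z" using assms(3) by blast+
    then have "(u,v,c) \<in> rem F z" using uvc assms(2) unfolding rem_mem by blast
    then show ?thesis unfolding darts_iff by blast
  qed
  have k3: "(a,b) \<in> darts (rem F z) \<Longrightarrow> (a,b) \<in> darts F" for a b using darts_rem[of a b F z] by blast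
  obtain b c where vbc: "(v,b,c) \<in> F" using assms(1) unfolding verts_iff by blast
  then have "(v,b) \<in> darts F" unfolding darts_iff by blast
  then have "(v,b) \<in> darts (rem F z)" by (rule k1)
  then have "v \<in> verts (rem F z)" unfolding darts_iff verts_iff by blast
  moreover have "(v,u) \<in> bdarts (rem F z) \<longleftrightarrow> (v,u) \<in> bdarts F" for u
    unfolding bdarts_iff using k1 k2 k3 by blast
  ultimately show ?thesis unfolding bverts_iff by blast
qed

lemma vcase_ii: assumes "v \<noteq> z" "z \<in> nbr F v" "v \<in> bverts F" "v \<noteq> v1" "v \<noteq> v2"
  shows "v \<in> verts (rem F z) \<and> v \<in> bverts (rem F z)"
proof -
  have vz: "(v,z) \<notin> darts F"
  proof
    assume a: "(v,z) \<in> darts F"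
    then have "(z,v) \<notin> darts F" using bd_edge[OF assms(3) zb] by blast
    then have "(v,z) \<in> bdarts F" using a unfolding bdarts_iff by blast
    then show False using in_z assms(5) by blast
  qed
  then have "(z,v) \<in> darts F" using assms(2) unfolding nbr_iff by blast
  then obtain r where zvr: "(z,v,r) \<in> F" unfolding darts_iff by blast
  have vrz: "(v,r,z) \<in> F" using wf1_rot[OF w(1) zvr] .
  have rz: "r \<noteq> z" "r \<noteq> v" using wf1_dist[OF w(1) zvr] by blast+
  show ?thesis
  proof (cases "(r,v) \<in> darts F")
    case True
    then obtain s where rvs: "(r,v,s) \<in> F" unfolding darts_iff by blast
    have "s \<noteq> z"
    proof
      assume "s = z"
      then have "(v,z,r) \<in> F" using wf1_rot[OF w(1) rvs] by simp
      then show False using vz unfolding darts_iff by blast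
    qed
    then have rr: "(r,v,s) \<in> rem F z" using rvs rz assms(1) unfolding rem_mem by blast
    then have "(v,s,r) \<in> rem F z" using wf1_rot[OF wr] by blast
    then have vv: "v \<in> verts (rem F z)" unfolding verts_iff by blast
    have "(r,v) \<in> darts (rem F z)" using rr unfolding darts_iff by blast
    moreover have "(v,r) \<notin> darts (rem F z)"
    proof
      assume "(v,r) \<in> darts (rem F z)"
      then obtain c where "(v,r,c) \<in> rem F z" unfolding darts_iff by blast
      then have "(v,r,c) \<in> F" "c \<noteq> z" unfolding rem_mem by blast+
      then show False using wf1_uniq[OF w(1) _ vrz] by blast
    qed
    ultimately have "(r,v) \<in> bdarts (rem F z)" unfolding bdarts_iff by blast
    then show ?thesis using vv in_bverts[OF wr] by blast
  next
    case False
    have vr: "(v,r) \<in> darts F" using vrz unfolding darts_iff by blast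
    then have bvr: "(v,r) \<in> bdarts F" using False unfolding bdarts_iff by blast
    have rb: "r \<in> bverts F" using in_bverts[OF w(1) bvr] .
    have "(r,z,v) \<in> F" using wf1_rot[OF w(1) vrz] .
    then have rzd: "(r,z) \<in> darts F" unfolding darts_iff by blast
    then have "(z,r) \<notin> darts F" using bd_edge[OF rb zb] by blast
    then have "(r,z) \<in> bdarts F" using rzd unfolding bdarts_iff by blast
    then have "r = v2" by (rule in_z)
    then have "v = v1" using in_v2 bvr by blast
    then show ?thesis using assms(4) by blast
  qed
qed

lemma vcase_iii: assumes "v \<noteq> z" "z \<in> nbr F v" "v \<notin> bverts F"
  shows "v \<in> verts (rem F z) \<and> v \<in> bverts (rem F z)"
proof -
  have idt: "(v,t) \<in> darts F \<and> (t,v) \<in> darts F" if "t \<in> nbr F v" for t using int_dart[OF w(1) assms(3) that] .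
  obtain r where vzr: "(v,z,r) \<in> F" using idt[OF assms(2)] unfolding darts_iff by blast
  obtain q where zvq: "(z,v,q) \<in> F" using idt[OF assms(2)] unfolding darts_iff by blast
  have vqz: "(v,q,z) \<in> F" using wf1_rot[OF w(1) zvq] .
  have qr: "q \<noteq> r"
  proof
    assume "q = r"
    then show False using vzr vqz w(2) unfolding notwin_def by blast
  qed
  have rvz: "(r,v,z) \<in> F" using wf1_rot2[OF w(1) vzr] .
  have rn: "r \<in> nbr F v" using rvz unfolding nbr_iff darts_iff by blast
  have rz: "r \<noteq> z" "r \<noteq> v" using wf1_dist[OF w(1) vzr] by blast+
  obtain s where vrs: "(v,r,s) \<in> F" using idt[OF rn] unfolding darts_iff by blast
  have "s \<noteq> z"
  proof
    assume "s = z"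
    then have "(z,v,r) \<in> F" using wf1_rot2[OF w(1) vrs] by simp
    then show False using wf1_uniq[OF w(1) _ zvq] qr by blast
  qed
  then have rr: "(v,r,s) \<in> rem F z" using vrs rz assms(1) unfolding rem_mem by blast
  then have vv: "v \<in> verts (rem F z)" unfolding verts_iff by blast
  have "(v,r) \<in> darts (rem F z)" using rr unfolding darts_iff by blast
  moreover have "(r,v) \<notin> darts (rem F z)"
  proof
    assume "(r,v) \<in> darts (rem F z)"
    then obtain c where "(r,v,c) \<in> rem F z" unfolding darts_iff by blast
    then have "(r,v,c) \<in> F" "c \<noteq> z" unfolding rem_mem by blast+
    then show False using wf1_uniq[OF w(1) _ rvz] by blast
  qed
  ultimately have "(v,r) \<in> bdarts (rem F z)" unfolding bdarts_iff by blast
  then show ?thesis using vv unfolding bverts_iff by blast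
qed

end

lemma edge_z_form: assumes "e \<in> edges F" "z \<in> e" shows "\<exists>u. e = {u,z}"
proof -
  obtain a b where ab: "e = {a,b}" using assms(1) unfolding edges_iff by blast
  then have "z = a \<or> z = b" using assms(2) by blast
  then show ?thesis
  proof
    assume "z = a" then have "e = {b,z}" using ab by (simp add: insert_commute)
    then show ?thesis by blast
  next
    assume "z = b" then have "e = {a,z}" using ab by simp
    then show ?thesis by blast
  qed
qed

context oc begin


lemma step_Pr:
  assumes b12': "(v1,v2) \<in> bdarts (rem F z)" and P': "Pr (rem F z) v1 v2 O'"
  shows "Pr F v1 v2 (orient_at F z \<union> O')"
proof -
  have A1: "\<forall>p\<in>orient_at F z \<union> O'. {fst p, snd p} \<in> edges F - {{v1,v2}}"
  proof
    fix p assume p: "p \<in> orient_at F z \<union> O'"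
    show "{fst p, snd p} \<in> edges F - {{v1,v2}}"
    proof (cases "p \<in> orient_at F z")
      case True
      have a: "{fst p, snd p} \<in> edges F" "z \<in> {fst p, snd p}" using OA_edge[OF True] by blast+
      have "{fst p, snd p} \<noteq> {v1,v2}"
      proof
        assume "{fst p, snd p} = {v1,v2}"
        then have "z \<in> {v1,v2}" using a(2) by simp
        then show False using zne by simp
      qed
      then show ?thesis using a(1) by simp
    next
      case False
      then have "p \<in> O'" using p by blast
      then have "{fst p, snd p} \<in> edges (rem F z) - {{v1,v2}}" by (rule Pr_D1[OF P'])
      then show ?thesis using edges_rem[of "{fst p, snd p}" F z] by blast
    qed
  qed
  have A2: "\<forall>e\<in>edges F - {{v1,v2}}. \<exists>!p. p \<in> orient_at F z \<union> O' \<and> {fst p, snd p} = e"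
  proof
    fix e assume e: "e \<in> edges F - {{v1,v2}}"
    show "\<exists>!p. p \<in> orient_at F z \<union> O' \<and> {fst p, snd p} = e"
    proof (cases "z \<in> e")
      case True
      obtain u where eu: "e = {u,z}" using edge_z_form[of e F z] e True by blast
      have eF: "{u,z} \<in> edges F" using e eu by blast
      have "\<exists>!p. p \<in> orient_at F z \<and> {fst p, snd p} = {u,z}" using OA_uniq[OF eF] .
      then obtain p where P: "p \<in> orient_at F z \<and> {fst p, snd p} = e"
        and U: "\<forall>q. q \<in> orient_at F z \<and> {fst q, snd q} = e \<longrightarrow> q = p"
        unfolding eu by (rule ex1E) iprover
      have n: "q \<notin> O'" if "{fst q, snd q} = e" for q
      proof
        assume "q \<in> O'"
        then have "{fst q, snd q} \<in> edges (rem F z)" using Pr_D1[OF P'] by simp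
        then show False using edges_rem[of "{fst q, snd q}" F z] True that by blast
      qed
      show ?thesis
      proof (rule ex1I[of _ p])
        show "p \<in> orient_at F z \<union> O' \<and> {fst p, snd p} = e" using P by simp
      next
        fix q assume q: "q \<in> orient_at F z \<union> O' \<and> {fst q, snd q} = e"
        then have "q \<in> orient_at F z" using n[of q] by blast
        then show "q = p" using U q by blast
      qed
    next
      case False
      have e2: "e \<in> edges (rem F z) - {{v1,v2}}" using edge_keep[of e] e False by blast
      have "\<exists>!p. p \<in> O' \<and> {fst p, snd p} = e" using Pr_D2[OF P' e2] .
      then obtain p where P: "p \<in> O' \<and> {fst p, snd p} = e" and U: "\<forall>q. q \<in> O' \<and> {fst q, snd q} = e \<longrightarrow> q = p"
        by (rule ex1E) iprover
      have n: "q \<notin> orient_at F z" if "{fst q, snd q} = e" for q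
      proof
        assume "q \<in> orient_at F z"
        then have "z \<in> {fst q, snd q}" using OA_edge by blast
        then show False using False that by simp
      qed
      show ?thesis
      proof (rule ex1I[of _ p])
        show "p \<in> orient_at F z \<union> O' \<and> {fst p, snd p} = e" using P by simp
      next
        fix q assume q: "q \<in> orient_at F z \<union> O' \<and> {fst q, snd q} = e"
        then have "q \<in> O'" using n[of q] by blast
        then show "q = p" using U q by blast
      qed
    qed
  qed
  have A3: "card {u. (u,v) \<in> orient_at F z \<union> O'} = (if v \<in> bverts F then (if v = v1 \<or> v = v2 then 0 else 2) else 3)"
    if v: "v \<in> verts F" for v
  proof -
    have S: "{u. (u,v) \<in> orient_at F z \<union> O'} = {u. (u,v) \<in> orient_at F z} \<union> {u. (u,v) \<in> O'}" by blast
    show ?thesis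
    proof (cases "v = z")
      case True
      have "{u. (u,v) \<in> O'} = {}" using Pr_in_verts[OF wr P'] nz_verts[of z F] True by blast
      then show ?thesis using S OA_z z_in2 True zb zne by simp
    next
      case vz: False
      show ?thesis
      proof (cases "z \<in> nbr F v")
        case False
        have "{u. (u,v) \<in> orient_at F z} = {}"
        proof (cases "v \<in> bverts F")
          case True then show ?thesis using bound_no_in[OF vz] by blast
        next
          case f: False then show ?thesis using int_in[OF vz f] False by simp
        qed
        moreover have "v \<in> verts (rem F z) \<and> (v \<in> bverts (rem F z) \<longleftrightarrow> v \<in> bverts F)"
          using vcase_i[OF v vz False] .
        ultimately show ?thesis using S Pr_D3[OF P', of v] by simp
      next
        case zn: True
        show ?thesis
        proof (cases "v \<in> bverts F")
          case True
          have o: "{u. (u,v) \<in> orient_at F z} = {}" using bound_no_in[OF vz True] .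
          show ?thesis
          proof (cases "v = v1 \<or> v = v2")
            case True
            have "v1 \<in> verts (rem F z)" "v2 \<in> verts (rem F z)" using b12' dart_verts[OF wr, of v1 v2] unfolding bdarts_iff by blast+
            moreover have "v1 \<in> bverts (rem F z)" "v2 \<in> bverts (rem F z)"
              using b12' in_bverts[OF wr, of v1 v2] unfolding bverts_iff by blast+
            ultimately have "v \<in> verts (rem F z)" "v \<in> bverts (rem F z)" using True by blast+
            then show ?thesis using S o Pr_D3[OF P', of v] True \<open>v \<in> bverts F\<close> by simp
          next
            case False
            have "v \<in> verts (rem F z) \<and> v \<in> bverts (rem F z)" using vcase_ii[OF vz zn \<open>v \<in> bverts F\<close>] False by blast
            then show ?thesis using S o Pr_D3[OF P', of v] False \<open>v \<in> bverts F\<close> by simp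
          qed
        next
          case False
          have o: "{u. (u,v) \<in> orient_at F z} = {z}" using int_in[OF vz False] zn by simp
          have vv: "v \<in> verts (rem F z) \<and> v \<in> bverts (rem F z)" using vcase_iii[OF vz zn False] .
          have n12: "v \<noteq> v1" "v \<noteq> v2" using False v1b v2b by blast+
          have c2: "card {u. (u,v) \<in> O'} = 2" using Pr_D3[OF P', of v] vv n12 by simp
          have zO: "z \<notin> {u. (u,v) \<in> O'}" using Pr_in_verts[OF wr P', of z v] nz_verts[of z F] by blast
          have fin: "finite {u. (u,v) \<in> O'}" using Pr_fin[OF wr P'] .
          have "{u. (u,v) \<in> orient_at F z \<union> O'} = insert z {u. (u,v) \<in> O'}" using S o by blast
          then have "card {u. (u,v) \<in> orient_at F z \<union> O'} = 3" using c2 zO fin by simp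
          then show ?thesis using False by simp
        qed
      qed
    qed
  qed
  have A3': "\<forall>v\<in>verts F. card {u. (u,v) \<in> orient_at F z \<union> O'} = (if v \<in> bverts F then (if v = v1 \<or> v = v2 then 0 else 2) else 3)"
    by (rule ballI) (rule A3)
  show ?thesis unfolding Pr_def by (intro conjI; (rule A1 | rule A2 | rule A3'))
qed

lemma last_Pr:
  assumes e: "rem F z = {}"
  shows "Pr F v1 v2 (orient_at F z)"
proof -
  obtain w where zw: "(z,w) \<in> bdarts F" using ex_w by blast
  have key: "u = v2 \<or> u = w" if u: "u \<in> verts F" "u \<noteq> z" for u
  proof -
    obtain b c where ubc: "(u,b,c) \<in> F" using u(1) unfolding verts_iff by blast
    have "(u,b,c) \<notin> rem F z" using e by simp
    then have "b = z \<or> c = z" using ubc u(2) unfolding rem_mem by blast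
    then have nb: "(u,z) \<in> darts F \<or> (z,u) \<in> darts F"
      using ubc wf1_rot2[OF w(1) ubc] unfolding darts_iff by blast
    show ?thesis
    proof (cases "(u,z) \<in> darts F \<and> (z,u) \<in> darts F")
      case True
      have ub: "u \<notin> bverts F" using bd_edge[OF _ zb, of u] True by blast
      obtain p where uzp: "(u,z,p) \<in> F" using True unfolding darts_iff by blast
      have "(p,u,z) \<in> F" using wf1_rot2[OF w(1) uzp] .
      then have "p \<in> nbr F u" unfolding nbr_iff darts_iff by blast
      then have "(u,p) \<in> darts F" using int_dart[OF w(1) ub] by blast
      then obtain x where upx: "(u,p,x) \<in> F" unfolding darts_iff by blast
      have "p \<noteq> z" using wf1_dist[OF w(1) uzp] by blast
      moreover have "(u,p,x) \<notin> rem F z" using e by simp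
      ultimately have "x = z" using upx u(2) unfolding rem_mem by blast
      then show ?thesis using upx uzp w(2) unfolding notwin_def by blast
    next
      case False
      then have "(u,z) \<in> bdarts F \<or> (z,u) \<in> bdarts F" using nb unfolding bdarts_iff by blast
      then show ?thesis using in_z[of u] bd_out_uniq[OF w(1) w(3) zw, of u] by blast
    qed
  qed
  have v1v: "v1 \<in> verts F" using b12 dart_verts[OF w(1), of v1 v2] unfolding bdarts_iff by blast
  have "v1 = w" using key[OF v1v] zne by blast
  then have vs: "u \<in> {v1,v2,z}" if "u \<in> verts F" for u using key[OF that] by (cases "u = z") auto
  have A1: "\<forall>p\<in>orient_at F z. {fst p, snd p} \<in> edges F - {{v1,v2}}"
  proof
    fix p assume p: "p \<in> orient_at F z"
    have a: "{fst p, snd p} \<in> edges F" "z \<in> {fst p, snd p}" using OA_edge[OF p] by blast+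
    have "{fst p, snd p} \<noteq> {v1,v2}"
    proof
      assume "{fst p, snd p} = {v1,v2}"
      then have "z \<in> {v1,v2}" using a(2) by simp
      then show False using zne by simp
    qed
    then show "{fst p, snd p} \<in> edges F - {{v1,v2}}" using a(1) by simp
  qed
  have A2: "\<forall>e\<in>edges F - {{v1,v2}}. \<exists>!p. p \<in> orient_at F z \<and> {fst p, snd p} = e"
  proof
    fix e assume e: "e \<in> edges F - {{v1,v2}}"
    have "e \<in> edges F" using e by blast
    then obtain a b where ab: "e = {a,b}" "(a,b) \<in> darts F" unfolding edges_iff by blast
    have abv: "a \<in> {v1,v2,z}" "b \<in> {v1,v2,z}" using dart_verts[OF w(1) ab(2)] vs[of a] vs[of b] by blast+
    have "a \<noteq> b" using ab(2) wf1_dist[OF w(1)] unfolding darts_iff by blast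
    have "z \<in> e"
    proof (rule ccontr)
      assume "z \<notin> e"
      then have "a \<in> {v1,v2}" "b \<in> {v1,v2}" using abv ab(1) by blast+
      then have "e = {v1,v2}" using ab(1) \<open>a \<noteq> b\<close> by blast
      then show False using e by blast
    qed
    then obtain u where eu: "e = {u,z}" using edge_z_form[of e F z] e by blast
    have eF: "{u,z} \<in> edges F" using e eu by blast
    show "\<exists>!p. p \<in> orient_at F z \<and> {fst p, snd p} = e" using OA_uniq[OF eF] unfolding eu .
  qed
  have A3: "card {u. (u,v) \<in> orient_at F z} = (if v \<in> bverts F then (if v = v1 \<or> v = v2 then 0 else 2) else 3)"
    if v: "v \<in> verts F" for v
  proof (cases "v = z")
    case True
    then show ?thesis using OA_z z_in2 zb zne by simp
  next
    case False
    then have v12: "v = v1 \<or> v = v2" using vs[OF v] by simp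
    then have "v \<in> bverts F" using v1b v2b by blast
    then have "{u. (u,v) \<in> orient_at F z} = {}" using bound_no_in[OF False] by blast
    then show ?thesis using v12 \<open>v \<in> bverts F\<close> by simp
  qed
  have A3': "\<forall>v\<in>verts F. card {u. (u,v) \<in> orient_at F z} = (if v \<in> bverts F then (if v = v1 \<or> v = v2 then 0 else 2) else 3)"
    by (rule ballI) (rule A3)
  show ?thesis unfolding Pr_def by (intro conjI; (rule A1 | rule A2 | rule A3'))
qed

end

lemma proc_bd: "proc F v1 v2 Os \<Longrightarrow> (v1,v2) \<in> bdarts F"
  by (induction rule: proc.induct) auto

lemma rem_eq: "{t \<in> F. z \<notin> {fst t, fst (snd t), snd (snd t)}} = rem F z"
  by (simp add: rem_def)

lemma proc_Pr:
  assumes p: "proc F v1 v2 Os" and Tk: "Tok T" and I: "Inv T F"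
  shows "Pr F v1 v2 Os"
  using p I
proof (induction rule: proc.induct)
  case (chord_step v1 v2 F x y F1 F2 Or1 Or2)
  have E': "edges F1 \<inter> edges F2 \<subseteq> {{x,y}}" using chord_step.hyps(9) by simp
  have E'': "edges F2 \<inter> edges F1 \<subseteq> {{x,y}}" using chord_step.hyps(9) by blast
  have F': "F = F2 \<union> F1" using chord_step.hyps(3) by blast
  have I1: "Inv T F1" using split_inv[OF chord_step.prems chord_step.hyps(3) chord_step.hyps(7) chord_step.hyps(8) E'] .
  have I2: "Inv T F2" using split_inv[OF chord_step.prems F' chord_step.hyps(8) chord_step.hyps(7) E''] .
  have P1: "Pr F1 v1 v2 Or1" using chord_step.IH(1) I1 .
  have P2: "Pr F2 x y Or2" using chord_step.IH(2) I2 .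
  show ?case using chord_Pr[OF chord_step.prems chord_step.hyps(1,2,3,4,7,8,9,10,11) P1 P2] .
next
  case (orient_last v1 v2 F z)
  interpret oc T F v1 v2 z
    using orient_last.prems Tk orient_last.hyps(1,2,3) by unfold_locales
  have "rem F z = {}" using orient_last.hyps(4) unfolding rem_eq .
  then show ?case by (rule last_Pr)
next
  case (orient_step v1 v2 F z F' Or')
  interpret oc T F v1 v2 z
    using orient_step.prems Tk orient_step.hyps(1,2,3) by unfold_locales
  have F': "F' = rem F z" using orient_step.hyps(4) unfolding rem_eq .
  have P': "Pr (rem F z) v1 v2 Or'" using orient_step.IH Inv_rem unfolding F' .
  have b': "(v1,v2) \<in> bdarts (rem F z)" using proc_bd[OF orient_step.hyps(6)] unfolding F' .
  show ?case using step_Pr[OF b' P'] .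
qed

lemma tg_wf: "triangular_graph T \<Longrightarrow> wf1 T"
  unfolding triangular_graph_def wf1_def rot_closed_def by blast

lemma tg_Tok: "triangular_graph T \<Longrightarrow> Tok T"
proof -
  assume t: "triangular_graph T"
  have "\<forall>v u w. (v,u) \<in> darts T \<longrightarrow> (v,w) \<in> darts T \<longrightarrow> (u,w) \<in> (link T v)\<^sup>*"
    using t unfolding triangular_graph_def by blast
  then show ?thesis using tg_wf[OF t] unfolding Tok_def by blast
qed

lemma tg_sym: "triangular_graph T \<Longrightarrow> (a,b) \<in> darts T \<Longrightarrow> (b,a) \<in> darts T"
  unfolding triangular_graph_def by blast

lemma tg_conn: "triangular_graph T \<Longrightarrow> x \<in> verts T \<Longrightarrow> y \<in> verts T \<Longrightarrow> (x,y) \<in> (darts T)\<^sup>*"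
  unfolding triangular_graph_def by blast

lemma tw_nb:
  assumes t: "triangular_graph T" and f1: "(s,\<alpha>,\<beta>) \<in> T" and f2: "(s,\<beta>,\<alpha>) \<in> T" and st: "(s,t) \<in> darts T"
  shows "t \<in> {\<alpha>,\<beta>}"
proof -
  have w: "wf1 T" using tg_wf[OF t] .
  have "(s,\<alpha>) \<in> darts T" using f1 unfolding darts_iff by blast
  then have "(\<alpha>,t) \<in> (link T s)\<^sup>*" using tg_Tok[OF t] st unfolding Tok_def by blast
  then show ?thesis
  proof (induction rule: rtrancl_induct)
    case base then show ?case by simp
  next
    case (step x y)
    have sxy: "(s,x,y) \<in> T" using step.hyps(2) unfolding link_iff .
    show ?case
    proof (cases "x = \<alpha>")
      case True then have "y = \<beta>" using wf1_uniq[OF w sxy] f1 by blast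
      then show ?thesis by simp
    next
      case False then have "x = \<beta>" using step.IH by blast
      then have "y = \<alpha>" using wf1_uniq[OF w sxy] f2 by blast
      then show ?thesis by simp
    qed
  qed
qed

lemma twin_verts:
  assumes t: "triangular_graph T" and f1: "(v,q,z) \<in> T" and f2: "(v,z,q) \<in> T"
  shows "verts T \<subseteq> {v,q,z}"
proof
  fix x assume x: "x \<in> verts T"
  have w: "wf1 T" using tg_wf[OF t] .
  have vv: "v \<in> verts T" using f1 unfolding verts_iff by blast
  have cl: "t \<in> {v,q,z}" if h: "s \<in> {v,q,z}" "(s,t) \<in> darts T" for s t
  proof -
    have g1: "(q,z,v) \<in> T" "(q,v,z) \<in> T" using wf1_rot[OF w f1] wf1_rot2[OF w f2] by blast+
    have g2: "(z,v,q) \<in> T" "(z,q,v) \<in> T" using wf1_rot2[OF w f1] wf1_rot[OF w f2] by blast+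
    consider "s = v" | "s = q" | "s = z" using h(1) by blast
    then show ?thesis
    proof cases
      case 1 then show ?thesis using tw_nb[OF t f1 f2] h(2) by blast
    next
      case 2 then show ?thesis using tw_nb[OF t g1(1) g1(2)] h(2) by blast
    next
      case 3 then show ?thesis using tw_nb[OF t g2(1) g2(2)] h(2) by blast
    qed
  qed
  have "(v,x) \<in> (darts T)\<^sup>*" using tg_conn[OF t vv x] .
  then show "x \<in> {v,q,z}"
  proof (induction rule: rtrancl_induct)
    case base then show ?case by simp
  next
    case (step y y') then show ?case using cl by blast
  qed
qed

lemma init_corner:
  assumes t: "triangular_graph T" and abc: "(a,b,c) \<in> T"
    and F0: "F0 = T - {(a,b,c),(b,c,a),(c,a,b)}" and u: "u \<in> nbr F0 a"
  shows "(c,u) \<in> (link F0 a)\<^sup>*"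
proof -
  have w: "wf1 T" using tg_wf[OF t] .
  have d: "a \<noteq> b" "b \<noteq> c" "a \<noteq> c" using wf1_dist[OF w abc] by blast+
  have "(c,a,b) \<in> T" using wf1_rot2[OF w abc] .
  then have "(c,a) \<in> darts T" unfolding darts_iff by blast
  then have ac: "(a,c) \<in> darts T" using tg_sym[OF t] by blast
  have "F0 \<subseteq> T" using F0 by blast
  then have "darts F0 \<subseteq> darts T" unfolding darts_def by blast
  then have "(a,u) \<in> darts T \<or> (u,a) \<in> darts T" using u unfolding nbr_iff by blast
  then have au: "(a,u) \<in> darts T" using tg_sym[OF t] by blast
  have "(c,u) \<in> (link T a)\<^sup>*" using tg_Tok[OF t] ac au unfolding Tok_def by blast
  then have q: "(c,u) \<in> {(x,y). (x,y) \<in> link T a \<and> y \<noteq> c}\<^sup>*" by (rule avoid_start)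
  have "{(x,y). (x,y) \<in> link T a \<and> y \<noteq> c} \<subseteq> link F0 a"
  proof
    fix p assume "p \<in> {(x,y). (x,y) \<in> link T a \<and> y \<noteq> c}"
    then obtain x y where p: "p = (x,y)" "(a,x,y) \<in> T" "y \<noteq> c" unfolding link_iff by blast
    have "(a,x,y) \<noteq> (a,b,c)" "(a,x,y) \<noteq> (b,c,a)" "(a,x,y) \<noteq> (c,a,b)" using p(3) d by auto
    then have "(a,x,y) \<in> F0" using F0 p(2) by blast
    then show "p \<in> link F0 a" using p(1) by (simp add: link_iff)
  qed
  then show ?thesis using q rtrancl_mono by blast
qed

lemma init_conn:
  assumes t: "triangular_graph T" and abc: "(a,b,c) \<in> T"
    and F0: "F0 = T - {(a,b,c),(b,c,a),(c,a,b)}"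
  shows "connl F0"
  unfolding connl_def
proof (intro allI ballI)
  fix v u u' assume u: "u \<in> nbr F0 v" and u': "u' \<in> nbr F0 v"
  have w: "wf1 T" using tg_wf[OF t] .
  show "(u,u') \<in> (link F0 v \<union> (link F0 v)\<inverse>)\<^sup>*"
  proof -
    have g: "(u,u') \<in> (link F0 v \<union> (link F0 v)\<inverse>)\<^sup>*" if "(r,u) \<in> (link F0 v)\<^sup>*" "(r,u') \<in> (link F0 v)\<^sup>*" for r
      using rt_sym[OF that(1)] rt_sym[OF that(2)] sym_rt rtrancl_trans by metis
    have bca: "(b,c,a) \<in> T" "(c,a,b) \<in> T" using wf1_rot[OF w abc] wf1_rot2[OF w abc] by blast+
    have F1: "F0 = T - {(b,c,a),(c,a,b),(a,b,c)}" using F0 by blast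
    have F2: "F0 = T - {(c,a,b),(a,b,c),(b,c,a)}" using F0 by blast
    consider "v = a" | "v = b" | "v = c" | "v \<notin> {a,b,c}" by blast
    then show ?thesis
    proof cases
      case 1 then show ?thesis using g init_corner[OF t abc F0] u u' by blast
    next
      case 2 then show ?thesis using g init_corner[OF t bca(1) F1] u u' by blast
    next
      case 3 then show ?thesis using g init_corner[OF t bca(2) F2] u u' by blast
    next
      case 4
      have L: "link F0 v = link T v" using 4 unfolding F0 link_def by auto
      have "F0 \<subseteq> T" using F0 by blast
      then have "darts F0 \<subseteq> darts T" unfolding darts_def by blast
      then have "(v,u) \<in> darts T" "(v,u') \<in> darts T" using u u' tg_sym[OF t] unfolding nbr_iff by blast+
      then have "(u,u') \<in> (link T v)\<^sup>*" using tg_Tok[OF t] unfolding Tok_def by blast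
      then show ?thesis using rt_sym L by metis
    qed
  qed
qed

lemma init_Inv:
  assumes t: "triangular_graph T" and abc: "(a,b,c) \<in> T" and nt: "notwin T"
    and F0: "F0 = T - {(a,b,c),(b,c,a),(c,a,b)}"
  shows "Inv T F0"
proof -
  have w: "wf1 T" using tg_wf[OF t] .
  have "rot_closed F0"
    unfolding rot_closed_def
  proof (intro allI impI)
    fix x y u assume a: "(x,y,u) \<in> F0"
    then have "(y,u,x) \<in> T" using wf1_rot[OF w] F0 by blast
    moreover have "(y,u,x) \<notin> {(a,b,c),(b,c,a),(c,a,b)}" using a F0 by auto
    ultimately show "(y,u,x) \<in> F0" using F0 by blast
  qed
  then have "wf1 F0" using wf1_subset[OF w] F0 by blast
  moreover have "notwin F0" using nt F0 unfolding notwin_def by blast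
  moreover have "connl F0" using init_conn[OF t abc F0] .
  moreover have "F0 \<subseteq> T" using F0 by blast
  ultimately show ?thesis unfolding Inv_def by blast
qed

theorem proposition4p1:
  fixes T :: "('v \<times> 'v \<times> 'v) set" and a b c v1 v2 :: 'v
    and d :: "'v \<times> 'v" and Ors :: "('v \<times> 'v) set"
  assumes "triangular_graph T"
    and "(a,b,c) \<in> T"
    and "(v1,v2) \<in> bdarts (T - {(a,b,c),(b,c,a),(c,a,b)})"
    and "d \<in> {(v1,v2),(v2,v1)}"
    and "proc (T - {(a,b,c),(b,c,a),(c,a,b)}) v1 v2 Ors"
  shows "(\<forall>e \<in> edges T - {{a,b},{b,c},{c,a}}.
            \<exists>!p. p \<in> insert d Ors \<and> {fst p, snd p} = e)
       \<and> (\<forall>v \<in> verts T - {a,b,c}.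
            card {u. (u,v) \<in> insert d Ors \<and> {u,v} \<in> edges T - {{a,b},{b,c},{c,a}}} = 3)"
proof -
  note t = assms(1) and abc = assms(2)
  define F0 where "F0 = T - {(a,b,c),(b,c,a),(c,a,b)}"
  have w: "wf1 T" using tg_wf[OF t] .
  have dst: "a \<noteq> b" "b \<noteq> c" "a \<noteq> c" using wf1_dist[OF w abc] by blast+
  have abcv: "a \<in> verts T" "b \<in> verts T" "c \<in> verts T"
    using abc wf1_rot[OF w abc] wf1_rot2[OF w abc] unfolding verts_iff by blast+
  show ?thesis
  proof (cases "notwin T")
    case False
    then obtain v q z where f1: "(v,q,z) \<in> T" and f2: "(v,z,q) \<in> T" unfolding notwin_def by blast
    have vs: "verts T \<subseteq> {v,q,z}" using twin_verts[OF t f1 f2] .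
    have sub: "{a,b,c} \<subseteq> {v,q,z}" using abcv vs by blast
    have "card {a,b,c} = 3" using dst by simp
    moreover have "card {v,q,z} \<le> 3" by (rule order_trans[OF card_insert_le_m1]) (auto simp: card_insert_le_m1)
    ultimately have "{a,b,c} = {v,q,z}" using sub card_subset_eq[of "{v,q,z}" "{a,b,c}"] card_mono[OF _ sub] by simp
    then have vs': "verts T \<subseteq> {a,b,c}" using vs by simp
    have c1: "edges T - {{a,b},{b,c},{c,a}} = {}"
    proof -
      have "e \<in> {{a,b},{b,c},{c,a}}" if e: "e \<in> edges T" for e
      proof -
        obtain s t' where st: "e = {s,t'}" "(s,t') \<in> darts T" using e unfolding edges_iff by blast
        have "s \<noteq> t'" using st(2) wf1_dist[OF w] unfolding darts_iff by blast
        moreover have "s \<in> {a,b,c}" "t' \<in> {a,b,c}" using dart_verts[OF w st(2)] vs' by blast+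
        ultimately show ?thesis using st(1) by (auto simp: insert_commute)
      qed
      then show ?thesis by blast
    qed
    have c2: "verts T - {a,b,c} = {}" using vs' by blast
    show ?thesis unfolding c1 c2 by simp
  next
    case True
    have I: "Inv T F0" using init_Inv[OF t abc True F0_def] .
    have P: "Pr F0 v1 v2 Ors" using proc_Pr[OF assms(5)[folded F0_def] tg_Tok[OF t] I] .
    have outer: "(x,y) \<in> {(a,b),(b,c),(c,a)}" if "(x,y,u) \<in> T" "(x,y,u) \<notin> F0" for x y u
      using that unfolding F0_def by auto
    have bd: "(s,t') \<in> {(b,a),(c,b),(a,c)}" if "(s,t') \<in> bdarts F0" for s t'
    proof -
      have "(s,t') \<in> darts T" "(t',s) \<notin> darts F0" using that unfolding bdarts_iff F0_def darts_def by blast+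
      then have "(t',s) \<in> darts T" using tg_sym[OF t] by blast
      then obtain x where "(t',s,x) \<in> T" unfolding darts_iff by blast
      moreover have "(t',s,x) \<notin> F0" using \<open>(t',s) \<notin> darts F0\<close> calculation unfolding darts_iff by blast
      ultimately have "(t',s) \<in> {(a,b),(b,c),(c,a)}" using outer by blast
      then show ?thesis by blast
    qed
    have b12: "(v1,v2) \<in> bdarts F0" using assms(3) unfolding F0_def .
    have v12: "{v1,v2} \<in> {{a,b},{b,c},{c,a}}" using bd[OF b12] by (auto simp: insert_commute)
    have v12': "v1 \<in> {a,b,c}" "v2 \<in> {a,b,c}" using bd[OF b12] by blast+
    have dE: "{fst d, snd d} = {v1,v2}" using assms(4) by (auto simp: insert_commute)
    have A1: "\<exists>!p. p \<in> insert d Ors \<and> {fst p, snd p} = e" if e: "e \<in> edges T - {{a,b},{b,c},{c,a}}" for e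
    proof -
      have "e \<in> edges T" using e by blast
      then obtain s t' where st: "e = {s,t'}" "(s,t') \<in> darts T" unfolding edges_iff by blast
      obtain x where stx: "(s,t',x) \<in> T" using st(2) unfolding darts_iff by blast
      have "(s,t',x) \<in> F0"
      proof (rule ccontr)
        assume "(s,t',x) \<notin> F0"
        then have "(s,t') \<in> {(a,b),(b,c),(c,a)}" using outer stx by blast
        then have "e \<in> {{a,b},{b,c},{c,a}}" using st(1) by blast
        then show False using e by blast
      qed
      then have "e \<in> edges F0" using st(1) unfolding edges_iff darts_iff by blast
      moreover have "e \<noteq> {v1,v2}" using e v12 by blast
      ultimately have "e \<in> edges F0 - {{v1,v2}}" by blast
      then have u: "\<exists>!p. p \<in> Ors \<and> {fst p, snd p} = e" by (rule Pr_D2[OF P])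
      have "{fst d, snd d} \<noteq> e" using dE \<open>e \<noteq> {v1,v2}\<close> by simp
      then show ?thesis using u by auto
    qed
    have A2: "card {u. (u,v) \<in> insert d Ors \<and> {u,v} \<in> edges T - {{a,b},{b,c},{c,a}}} = 3"
      if v: "v \<in> verts T - {a,b,c}" for v
    proof -
      have "v \<in> verts T" using v by blast
      then obtain x y where vxy: "(v,x,y) \<in> T" unfolding verts_iff by blast
      have "v \<noteq> a" "v \<noteq> b" "v \<noteq> c" using v by blast+
      then have "(v,x,y) \<in> F0" unfolding F0_def using vxy by simp
      then have vF: "v \<in> verts F0" unfolding verts_iff by blast
      have vb: "v \<notin> bverts F0"
      proof
        assume "v \<in> bverts F0"
        then obtain u where "(v,u) \<in> bdarts F0" unfolding bverts_iff by blast
        then have "(v,u) \<in> {(b,a),(c,b),(a,c)}" by (rule bd)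
        then show False using \<open>v \<noteq> a\<close> \<open>v \<noteq> b\<close> \<open>v \<noteq> c\<close> by blast
      qed
      have c3: "card {u. (u,v) \<in> Ors} = 3" using Pr_D3[OF P vF] vb by simp
      have "{u. (u,v) \<in> insert d Ors \<and> {u,v} \<in> edges T - {{a,b},{b,c},{c,a}}} = {u. (u,v) \<in> Ors}"
      proof (intro set_eqI iffI)
        fix u assume "u \<in> {u. (u,v) \<in> insert d Ors \<and> {u,v} \<in> edges T - {{a,b},{b,c},{c,a}}}"
        then have "(u,v) \<in> insert d Ors" by blast
        moreover have "snd d \<in> {a,b,c}" using assms(4) v12' by auto
        then have "(u,v) \<noteq> d" using \<open>v \<noteq> a\<close> \<open>v \<noteq> b\<close> \<open>v \<noteq> c\<close> by auto
        ultimately show "u \<in> {u. (u,v) \<in> Ors}" by blast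
      next
        fix u assume "u \<in> {u. (u,v) \<in> Ors}"
        then have uo: "(u,v) \<in> Ors" by blast
        have "{u,v} \<in> edges F0" using Pr_D1[OF P uo] by simp
        then obtain s' t' where "{u,v} = {s',t'}" "(s',t') \<in> darts F0" unfolding edges_iff by blast
        moreover have "darts F0 \<subseteq> darts T" unfolding F0_def darts_def by blast
        ultimately have "{u,v} \<in> edges T" unfolding edges_iff by blast
        moreover have "{u,v} \<notin> {{a,b},{b,c},{c,a}}" using \<open>v \<noteq> a\<close> \<open>v \<noteq> b\<close> \<open>v \<noteq> c\<close> by (auto simp: doubleton_eq_iff)
        ultimately show "u \<in> {u. (u,v) \<in> insert d Ors \<and> {u,v} \<in> edges T - {{a,b},{b,c},{c,a}}}"
          using uo by blast
      qed
      then show ?thesis using c3 by simp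
    qed
    show ?thesis
    proof (intro conjI ballI)
      fix e assume "e \<in> edges T - {{a,b},{b,c},{c,a}}"
      then show "\<exists>!p. p \<in> insert d Ors \<and> {fst p, snd p} = e" by (rule A1)
    next
      fix v assume "v \<in> verts T - {a,b,c}"
      then show "card {u. (u,v) \<in> insert d Ors \<and> {u,v} \<in> edges T - {{a,b},{b,c},{c,a}}} = 3" by (rule A2)
    qed
  qed
qed

end
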